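(* Let $d\ge2$, $L\in\mathbb{N}$, and let $f:[0,1)^d\to[0,\infty)$ be $L$-piecewise constant. There is a constant $C>0$ depending only on $d$ such that for every $\varepsilon>0$, every integer $k_1\ge L$, every integer $k_2\ge C\|f\|_{L^\infty((0,1)^d)}k_1^{d-1}/\varepsilon^d$, and every $\mathbf{b}\in\Phi(k_1,k_2)$, \[\sum_{j\in\mathcal{H}_{\mathbf b}}p_{\mathbf b,j}^{1/d}\le\bar J+\varepsilon.\]
   Context: $x\leqq y$ means $x_i\le y_i$ for all $i$, $x<y$ means $x_i<y_i$ for all $i$. Extend $f$ by $0$ outside $[0,1)^d$. For a multiindex $\alpha$ with integer entries $1\le\alpha_i\le L$, $Q_{L,\alpha}=\{x\in[0,1)^d:\alpha-(1,\dots,1)\leqq Lx<\alpha\}$; $f$ is $L$-piecewise constant if it is constant on each $Q_{L,\alpha}$. $\mathcal{A}$ is the set of $\gamma\in C^1([0,1];\mathbb{R}^d)$ with all components of $\gamma'(t)$ nonnegative and $\gamma'(t)\ne0$ for every $t$; $J(\gamma)=\int_0^1 f(\gamma(t))^{1/d}(\gamma_1'(t)\cdots\gamma_d'(t))^{1/d}dt$; $\bar J=\sup_{\gamma\in\mathcal{A}}J(\gamma)$. Given integers $k_1,k_2\ge1$, set $\Delta x=1/k_1$ and $\Delta y=\Delta x/k_2$. $\Phi(k_1,k_2)$ is the set of sequences $\mathbf b=(b_j)_{j=1}^{k_1}$ of multiindices $b_j$ with nonnegative integer entries in $\mathbb{N}^{d-1}$ such that $b_1\leqq\cdots\leqq b_{k_1}$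 and $\|b_j\|_\infty\le k_1k_2$. For $\mathbf b\in\Phi(k_1,k_2)$ set $z_{\mathbf b,0}=0\in\mathbb{R}^d$ and $z_{\mathbf b,j}=(b_j\Delta y,\,j\Delta x)\in\mathbb{R}^{d-1}\times\mathbb{R}$ for $j\ge1$; $R_{\mathbf b,j}=\{x\in[0,1)^d:z_{\mathbf b,j-1}-(1,\dots,1,0)\Delta y\leqq x<z_{\mathbf b,j}\}$ for $1\le j\le k_1$; $p_{\mathbf b,j}=\int_{R_{\mathbf b,j}}f(x)\,dx$; and $\mathcal{H}_{\mathbf b}=\{j: R_{\mathbf b,j}\subset Q_{L,\alpha}\text{ for some }\alpha\}$. *)

theory Defs
  imports "HOL-Analysis.Analysis" "HOL-Probability.Essential_Supremum"
begin

text \<open>Points of R^d are modelled as elements of (real^'m) \<times> real, where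
  'm is a finite index type with CARD('m) = d - 1 (so d \<ge> 2 automatically).
  The last coordinate is the second component.\<close>

definition dim_of :: "('m::finite) itself \<Rightarrow> nat" where
  "dim_of _ = CARD('m) + 1"

definition unit_cube :: "((real^'m::finite) \<times> real) set" where
  "unit_cube = {x. (\<forall>i. 0 \<le> fst x $ i \<and> fst x $ i < 1) \<and> 0 \<le> snd x \<and> snd x < 1}"

definition open_unit_cube :: "((real^'m::finite) \<times> real) set" where
  "open_unit_cube = {x. (\<forall>i. 0 < fst x $ i \<and> fst x $ i < 1) \<and> 0 < snd x \<and> snd x < 1}"

text \<open>Q_{L,alpha} for a multiindex alpha (entries meant to be in 1..L).\<close>
definition Qcube :: "nat \<Rightarrow> ((nat^'m::finite) \<times> nat) \<Rightarrow> ((real^'m) \<times> real) set" where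
  "Qcube L \<alpha> = {x \<in> unit_cube.
     (\<forall>i. real (fst \<alpha> $ i) - 1 \<le> real L * fst x $ i \<and> real L * fst x $ i < real (fst \<alpha> $ i)) \<and>
     real (snd \<alpha>) - 1 \<le> real L * snd x \<and> real L * snd x < real (snd \<alpha>)}"

definition valid_index :: "nat \<Rightarrow> ((nat^'m::finite) \<times> nat) \<Rightarrow> bool" where
  "valid_index L \<alpha> \<longleftrightarrow> (\<forall>i. 1 \<le> fst \<alpha> $ i \<and> fst \<alpha> $ i \<le> L) \<and> 1 \<le> snd \<alpha> \<and> snd \<alpha> \<le> L"

definition piecewise_constant :: "nat \<Rightarrow> ((real^'m::finite) \<times> real \<Rightarrow> real) \<Rightarrow> bool" where
  "piecewise_constant L f \<longleftrightarrow>
     (\<forall>\<alpha>. valid_index L \<alpha> \<longrightarrow> (\<exists>c. \<forall>x\<in>Qcube L \<alpha>. f x = c))"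

definition Linf_norm :: "((real^'m::finite) \<times> real \<Rightarrow> real) \<Rightarrow> ereal" where
  "Linf_norm f = esssup (restrict_space lborel open_unit_cube) (\<lambda>x. ereal \<bar>f x\<bar>)"

definition curve_deriv :: "(real \<Rightarrow> (real^'m::finite) \<times> real) \<Rightarrow> real \<Rightarrow> (real^'m) \<times> real" where
  "curve_deriv \<gamma> t = vector_derivative \<gamma> (at t within {0..1})"

definition admissible :: "(real \<Rightarrow> (real^'m::finite) \<times> real) \<Rightarrow> bool" where
  "admissible \<gamma> \<longleftrightarrow>
     (\<forall>t\<in>{0..1}. \<gamma> differentiable (at t within {0..1})) \<and>
     continuous_on {0..1} (curve_deriv \<gamma>) \<and>
     (\<forall>t\<in>{0..1}. (\<forall>i. 0 \<le> fst (curve_deriv \<gamma> t) $ i) \<and> 0 \<le> snd (curve_deriv \<gamma> t)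
                  \<and> curve_deriv \<gamma> t \<noteq> 0)"

definition Jfun :: "((real^'m::finite) \<times> real \<Rightarrow> real) \<Rightarrow> (real \<Rightarrow> (real^'m) \<times> real) \<Rightarrow> real" where
  "Jfun f \<gamma> = integral {0..1} (\<lambda>t.
     f (\<gamma> t) powr (1 / real (dim_of TYPE('m))) *
     ((\<Prod>i\<in>UNIV. fst (curve_deriv \<gamma> t) $ i) * snd (curve_deriv \<gamma> t)) powr (1 / real (dim_of TYPE('m))))"

definition Jbar :: "((real^'m::finite) \<times> real \<Rightarrow> real) \<Rightarrow> real" where
  "Jbar f = Sup (Jfun f ` {\<gamma>. admissible \<gamma>})"

text \<open>Phi(k1,k2): sequences b_1 \<le> ... \<le> b_{k1} of multiindices in N^{d-1}
  with sup-norm at most k1*k2 (only the values at 1..k1 matter).\<close>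
definition Phi :: "nat \<Rightarrow> nat \<Rightarrow> (nat \<Rightarrow> nat^'m::finite) set" where
  "Phi k1 k2 = {b. (\<forall>j\<in>{1..k1}. \<forall>j'\<in>{1..k1}. j \<le> j' \<longrightarrow> (\<forall>i. b j $ i \<le> b j' $ i)) \<and>
                   (\<forall>j\<in>{1..k1}. \<forall>i. b j $ i \<le> k1 * k2)}"

definition zpt :: "nat \<Rightarrow> nat \<Rightarrow> (nat \<Rightarrow> nat^'m::finite) \<Rightarrow> nat \<Rightarrow> (real^'m) \<times> real" where
  "zpt k1 k2 b j = (if j = 0 then 0 else
     ((\<chi> i. real (b j $ i) * (1 / real k1 / real k2)), real j * (1 / real k1)))"

definition Rset :: "nat \<Rightarrow> nat \<Rightarrow> (nat \<Rightarrow> nat^'m::finite) \<Rightarrow> nat \<Rightarrow> ((real^'m) \<times> real) set" where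
  "Rset k1 k2 b j = {x \<in> unit_cube.
     (\<forall>i. fst (zpt k1 k2 b (j - 1)) $ i - 1 / real k1 / real k2 \<le> fst x $ i \<and>
          fst x $ i < fst (zpt k1 k2 b j) $ i) \<and>
     snd (zpt k1 k2 b (j - 1)) \<le> snd x \<and> snd x < snd (zpt k1 k2 b j)}"

definition pval :: "((real^'m::finite) \<times> real \<Rightarrow> real) \<Rightarrow> nat \<Rightarrow> nat \<Rightarrow> (nat \<Rightarrow> nat^'m) \<Rightarrow> nat \<Rightarrow> real" where
  "pval f k1 k2 b j = integral (Rset k1 k2 b j) f"

definition Hset :: "nat \<Rightarrow> nat \<Rightarrow> nat \<Rightarrow> (nat \<Rightarrow> nat^'m::finite) \<Rightarrow> nat set" where
  "Hset L k1 k2 b = {j \<in> {1..k1}. \<exists>\<alpha>::(nat^'m) \<times> nat. valid_index L \<alpha> \<and> Rset k1 k2 b j \<subseteq> Qcube L \<alpha>}"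

end

theory Submission
  imports Defs
begin

definition pa :: "nat \<Rightarrow> real" where "pa m = (2 * real m + 1) / (2 * real m)"
definition pP :: "nat \<Rightarrow> real \<Rightarrow> real" where
  "pP m x = pa m * (x - ((2*x - 1) ^ (2*m+1) + 1) / (2 * (2 * real m + 1)))"
definition dpsi :: "nat \<Rightarrow> real \<Rightarrow> real" where
  "dpsi m x = pa m * max 0 (1 - (2*x - 1) ^ (2*m))"
definition psi :: "nat \<Rightarrow> real \<Rightarrow> real" where
  "psi m x = (if x \<in> {..0} then 0 else if x \<in> {..1} then pP m x else 1)"

lemma pP_deriv: "(pP m has_real_derivative pa m * (1 - (2*x - 1) ^ (2*m))) (at x within S)"
  unfolding pP_def
  apply (rule derivative_eq_intros refl | simp)+
  apply (simp add: field_simps)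
  done

lemma pa_pos: "m \<ge> 1 \<Longrightarrow> pa m > 0" by (simp add: pa_def)
lemma pa_ge1: "m \<ge> 1 \<Longrightarrow> pa m \<ge> 1" by (simp add: pa_def)

lemma pP0: "pP m 0 = 0" by (simp add: pP_def)
lemma pP1: "m \<ge> 1 \<Longrightarrow> pP m 1 = 1"
proof -
  assume "m \<ge> 1" hence "real m > 0" by simp
  hence "real m * 4 > 0" "real m * (real m * 8) > 0" by simp_all
  hence "real m * 4 + real m * (real m * 8) \<noteq> 0" by linarith
  thus ?thesis by (simp add: pP_def pa_def field_simps)
qed

lemma even_pow_ge1: "\<bar>y\<bar> \<ge> 1 \<Longrightarrow> (y::real) ^ (2*m) \<ge> 1"
proof -
  assume "\<bar>y\<bar> \<ge> 1"
  hence "1 \<le> \<bar>y\<bar> ^ (2*m)" by (simp add: one_le_power)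
  also have "\<bar>y\<bar> ^ (2*m) = y ^ (2*m)" by (simp add: power_even_abs)
  finally show ?thesis .
qed

lemma even_pow_le1: "\<bar>y\<bar> \<le> 1 \<Longrightarrow> (y::real) ^ (2*m) \<le> 1"
proof -
  assume "\<bar>y\<bar> \<le> 1"
  hence "\<bar>y\<bar> ^ (2*m) \<le> 1" by (simp add: power_le_one)
  thus ?thesis by (simp add: power_even_abs)
qed

lemma even_pow_lt1: "\<bar>y\<bar> < 1 \<Longrightarrow> m \<ge> 1 \<Longrightarrow> (y::real) ^ (2*m) < 1"
proof -
  assume "\<bar>y\<bar> < 1" "m \<ge> 1"
  hence "\<bar>y\<bar> ^ (2*m) < 1" by (simp add: power_less_one_iff)
  thus ?thesis by (simp add: power_even_abs)
qed

lemma dpsi_out: "x \<le> 0 \<or> x \<ge> 1 \<Longrightarrow> dpsi m x = 0"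
proof -
  assume "x \<le> 0 \<or> x \<ge> 1"
  hence "\<bar>2*x - 1\<bar> \<ge> 1" by auto
  hence "(2*x-1)^(2*m) \<ge> 1" by (rule even_pow_ge1)
  thus ?thesis by (simp add: dpsi_def)
qed

lemma dpsi_in: "0 \<le> x \<Longrightarrow> x \<le> 1 \<Longrightarrow> dpsi m x = pa m * (1 - (2*x - 1) ^ (2*m))"
proof -
  assume "0 \<le> x" "x \<le> 1"
  hence "\<bar>2*x - 1\<bar> \<le> 1" by auto
  hence "(2*x-1)^(2*m) \<le> 1" by (rule even_pow_le1)
  thus ?thesis by (simp add: dpsi_def)
qed

lemma dpsi_pos: "m \<ge> 1 \<Longrightarrow> 0 < x \<Longrightarrow> x < 1 \<Longrightarrow> dpsi m x > 0"
proof -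
  assume a: "m \<ge> 1" "0 < x" "x < 1"
  hence "\<bar>2*x - 1\<bar> < 1" by auto
  hence "(2*x-1)^(2*m) < 1" using a by (intro even_pow_lt1)
  thus ?thesis using a by (simp add: dpsi_def pa_pos)
qed

lemma dpsi_nonneg: "m \<ge> 1 \<Longrightarrow> dpsi m x \<ge> 0"
  using pa_pos[of m] by (simp add: dpsi_def)

lemma dpsi_le: "m \<ge> 1 \<Longrightarrow> dpsi m x \<le> pa m"
proof -
  assume "m \<ge> 1"
  have "(2*x-1)^(2*m) \<ge> 0" by (simp add: zero_le_even_power)
  hence "max 0 (1 - (2*x - 1) ^ (2*m)) \<le> 1" by simp
  thus ?thesis using pa_pos[OF \<open>m\<ge>1\<close>] by (simp add: dpsi_def)
qed

lemma continuous_dpsi: "continuous_on S (dpsi m)"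
  unfolding dpsi_def by (intro continuous_intros)

lemma psi1_deriv:
  assumes "m \<ge> 1"
  shows "((\<lambda>x. if x \<in> {..1} then pP m x else 1) has_real_derivative
     (if x \<in> {..1} then pa m * (1 - (2*x - 1) ^ (2*m)) else 0)) (at x within UNIV)"
  unfolding has_real_derivative_iff_has_vector_derivative
  apply (rule has_vector_derivative_If_within_closures[where T = "{1<..}"])
  using assms
  by (auto simp: pP1 has_real_derivative_iff_has_vector_derivative[symmetric] pP_deriv
     intro!: derivative_eq_intros)

lemma psi_deriv:
  assumes "m \<ge> 1"
  shows "(psi m has_real_derivative dpsi m x) (at x)"
proof -
  have D: "((\<lambda>x. if x \<in> {..1} then pP m x else 1) has_real_derivative
     (if y \<in> {..1} then pa m * (1 - (2*y - 1) ^ (2*m)) else 0)) (at y within S)" for y S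
    using psi1_deriv[OF assms, of y] by (rule has_field_derivative_at_within)
  have "((\<lambda>x. if x \<in> {..0} then 0 else (if x \<in> {..1} then pP m x else 1)) has_real_derivative
     (if x \<in> {..0} then 0 else (if x \<in> {..1} then pa m * (1 - (2*x - 1) ^ (2*m)) else 0))) (at x within UNIV)"
    unfolding has_real_derivative_iff_has_vector_derivative
    apply (rule has_vector_derivative_If_within_closures[where T = "{0<..}"])
    apply (auto simp: pP0 has_real_derivative_iff_has_vector_derivative[symmetric]
       intro!: derivative_eq_intros)
    subgoal using D[of x] by simp
    subgoal using D[of x] by simp
    subgoal using D[of 0] by simp
    done
  moreover have "(if x \<in> {..0} then 0 else (if x \<in> {..1} then pa m * (1 - (2*x - 1) ^ (2*m)) else 0)) = dpsi m x"
    using dpsi_out dpsi_in by auto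
  ultimately show ?thesis unfolding psi_def by simp
qed

lemma psi_le0: "x \<le> 0 \<Longrightarrow> psi m x = 0" by (simp add: psi_def)
lemma psi_ge1: "m \<ge> 1 \<Longrightarrow> x \<ge> 1 \<Longrightarrow> psi m x = 1" by (auto simp: psi_def pP0 pP1)

lemma psi_cont: "m \<ge> 1 \<Longrightarrow> continuous_on S (psi m)"
  by (meson DERIV_isCont continuous_at_imp_continuous_on psi_deriv)

lemma psi_strict:
  assumes "m \<ge> 1" "0 < x" "x < 1"
  shows "0 < psi m x" "psi m x < 1"
proof -
  have "psi m 0 < psi m x"
    apply (rule DERIV_pos_imp_increasing_open[OF \<open>0 < x\<close>])
    using assms psi_deriv dpsi_pos apply (meson order.strict_trans)
    using psi_cont[OF assms(1)] .
  thus "0 < psi m x" by (simp add: psi_le0)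
  have "psi m x < psi m 1"
    apply (rule DERIV_pos_imp_increasing_open[OF \<open>x < 1\<close>])
    using assms psi_deriv dpsi_pos apply (meson order.strict_trans)
    using psi_cont[OF assms(1)] .
  thus "psi m x < 1" using assms by (simp add: psi_ge1)
qed

lemma psi_bounds: "m \<ge> 1 \<Longrightarrow> 0 \<le> psi m x \<and> psi m x \<le> 1"
proof (cases "x \<le> 0 \<or> x \<ge> 1")
  case True
  assume "m \<ge> 1" thus ?thesis using True psi_le0 psi_ge1 by force
next
  case False
  assume "m \<ge> 1" thus ?thesis using False psi_strict[of m x] by force
qed

definition gam :: "nat \<Rightarrow> nat \<Rightarrow> (nat \<Rightarrow> (real^'m::finite) \<times> real) \<Rightarrow> real \<Rightarrow> (real^'m) \<times> real" where
  "gam m k W t = (\<Sum>j\<in>{1..k}. psi m (real k * t - real (j - 1)) *\<^sub>R W j) + (0, t)"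

definition dgam :: "nat \<Rightarrow> nat \<Rightarrow> (nat \<Rightarrow> (real^'m::finite) \<times> real) \<Rightarrow> real \<Rightarrow> (real^'m) \<times> real" where
  "dgam m k W t = (\<Sum>j\<in>{1..k}. (real k * dpsi m (real k * t - real (j - 1))) *\<^sub>R W j) + (0, 1)"

lemma gam_deriv:
  assumes "m \<ge> 1"
  shows "(gam m k W has_vector_derivative dgam m k W t) (at t within S)"
proof -
  have P: "((\<lambda>t. psi m (real k * t - real (j - 1))) has_real_derivative (real k * dpsi m (real k * t - real (j - 1)))) (at t within S)" for j
  proof -
    have "((\<lambda>t. real k * t - real (j - 1)) has_real_derivative real k) (at t)"
      by (auto intro!: derivative_eq_intros)
    from DERIV_chain2[OF psi_deriv[OF assms] this]
    have "((\<lambda>t. psi m (real k * t - real (j - 1))) has_real_derivative (dpsi m (real k * t - real (j - 1)) * real k)) (at t)" .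
    thus ?thesis by (simp add: mult.commute has_field_derivative_at_within)
  qed
  have S1: "((\<lambda>x. psi m (real k * x - real (j - 1)) *\<^sub>R W j) has_vector_derivative (real k * dpsi m (real k * t - real (j - 1))) *\<^sub>R W j) (at t within S)" for j
    using has_vector_derivative_scaleR[OF P has_vector_derivative_const, of j "W j"] by simp
  have S2: "((\<lambda>x. (0::real^'m, x)) has_vector_derivative (0,1)) (at t within S)"
    by (rule has_vector_derivative_Pair) (auto intro: has_vector_derivative_const has_vector_derivative_id)
  show ?thesis
    unfolding gam_def dgam_def
    by (rule has_vector_derivative_add[OF has_vector_derivative_sum[OF S1] S2])
qed

lemma curve_deriv_gam:
  assumes "m \<ge> 1" "t \<in> {0..1}"
  shows "curve_deriv (gam m k W) t = dgam m k W t"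
proof -
  have "(gam m k W has_vector_derivative dgam m k W t) (at t within cbox 0 1)" by (rule gam_deriv[OF assms(1)])
  from vector_derivative_within_cbox[OF _ _ this] show ?thesis using assms by (auto simp: curve_deriv_def cbox_interval)
qed

lemma fst_dgam: "fst (dgam m k W t) $ i = (\<Sum>j\<in>{1..k}. real k * dpsi m (real k * t - real (j - 1)) * fst (W j) $ i)"
  by (simp add: dgam_def fst_sum)
lemma snd_dgam: "snd (dgam m k W t) = (\<Sum>j\<in>{1..k}. real k * dpsi m (real k * t - real (j - 1)) * snd (W j)) + 1"
  by (simp add: dgam_def snd_sum)
lemma fst_gam: "fst (gam m k W t) $ i = (\<Sum>j\<in>{1..k}. psi m (real k * t - real (j - 1)) * fst (W j) $ i)"
  by (simp add: gam_def fst_sum)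
lemma snd_gam: "snd (gam m k W t) = (\<Sum>j\<in>{1..k}. psi m (real k * t - real (j - 1)) * snd (W j)) + t"
  by (simp add: gam_def snd_sum)

lemma admissible_gam:
  assumes "m \<ge> 1" "\<And>j i. fst (W j) $ i \<ge> 0" "\<And>j. snd (W j) \<ge> 0"
  shows "admissible (gam m k W)"
  unfolding admissible_def
proof (intro conjI ballI allI)
  fix t :: real assume t: "t \<in> {0..1}"
  show "gam m k W differentiable at t within {0..1}"
    using gam_deriv[OF assms(1)] unfolding differentiable_def has_vector_derivative_def by blast
  show "0 \<le> fst (curve_deriv (gam m k W) t) $ i" for i
    unfolding curve_deriv_gam[OF assms(1) t] fst_dgam
    using assms dpsi_nonneg by (intro sum_nonneg mult_nonneg_nonneg) auto
  have "0 \<le> (\<Sum>j\<in>{1..k}. real k * dpsi m (real k * t - real (j - 1)) * snd (W j))"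
    using assms dpsi_nonneg by (intro sum_nonneg mult_nonneg_nonneg) auto
  thus "0 \<le> snd (curve_deriv (gam m k W) t)"
    unfolding curve_deriv_gam[OF assms(1) t] snd_dgam by simp
  have "snd (dgam m k W t) > 0" using \<open>0 \<le> (\<Sum>j\<in>{1..k}. _)\<close> by (simp add: snd_dgam)
  thus "curve_deriv (gam m k W) t \<noteq> 0"
    unfolding curve_deriv_gam[OF assms(1) t] by auto
next
  have "continuous_on {0..1} (dgam m k W)"
    unfolding dgam_def by (intro continuous_intros continuous_on_compose2[OF continuous_dpsi]) auto
  thus "continuous_on {0..1} (curve_deriv (gam m k W))"
    using curve_deriv_gam[OF assms(1)] by (metis continuous_on_cong)
qed

lemma dim_of_ge2: "real (dim_of TYPE('m::finite)) \<ge> 2"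
  by (simp add: dim_of_def)

lemma lin_l: "bounded_linear (\<lambda>x::(real^'m::finite) \<times> real. (\<Sum>i\<in>UNIV. fst x $ i) + snd x)"
  by (intro bounded_linear_add bounded_linear_sum bounded_linear_snd
      bounded_linear_compose[OF bounded_linear_vec_nth bounded_linear_fst])

lemma pow_powr_inv: "0 \<le> (s::real) \<Longrightarrow> n > 0 \<Longrightarrow> (s ^ n) powr (1 / real n) = s"
proof (cases "s = 0")
  case False
  assume "0 \<le> s" "n > 0"
  hence "s > 0" using False by simp
  hence "(s ^ n) powr (1 / real n) = (s powr real n) powr (1 / real n)" by (simp add: powr_realpow)
  also have "\<dots> = s" using \<open>n > 0\<close> \<open>s > 0\<close> by (simp add: powr_powr)
  finally show ?thesis .
qed simp

lemma prod_le_pow: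
  fixes c :: "'a \<Rightarrow> real"
  assumes "finite A" "\<And>i. i \<in> A \<Longrightarrow> 0 \<le> c i" "\<And>i. i \<in> A \<Longrightarrow> c i \<le> s"
  shows "prod c A \<le> s ^ card A"
proof -
  have "prod c A \<le> prod (\<lambda>_. s) A" using assms by (intro prod_mono) auto
  thus ?thesis by simp
qed

lemma root_prod_le_sum:
  fixes v :: "(real^'m::finite) \<times> real"
  assumes "\<forall>i. 0 \<le> fst v $ i" "0 \<le> snd v"
  shows "((\<Prod>i\<in>UNIV. fst v $ i) * snd v) powr (1 / real (dim_of TYPE('m)))
        \<le> (\<Sum>i\<in>UNIV. fst v $ i) + snd v"
proof -
  define s where "s = (\<Sum>i\<in>UNIV. fst v $ i) + snd v"
  have s0: "s \<ge> 0" using assms unfolding s_def by (simp add: sum_nonneg)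
  have ci: "fst v $ i \<le> s" for i
  proof -
    have "fst v $ i \<le> (\<Sum>i\<in>UNIV. fst v $ i)"
      using assms by (intro member_le_sum) auto
    thus ?thesis using assms unfolding s_def by simp
  qed
  have cl: "snd v \<le> s" using assms unfolding s_def by (simp add: sum_nonneg)
  have "(\<Prod>i\<in>UNIV. fst v $ i) \<le> s ^ CARD('m)"
    using prod_le_pow[of UNIV "\<lambda>i. fst v $ i" s] assms ci by simp
  hence P: "(\<Prod>i\<in>UNIV. fst v $ i) * snd v \<le> s ^ CARD('m) * s"
    using assms cl s0 by (intro mult_mono) (auto simp: prod_nonneg)
  have P0: "0 \<le> (\<Prod>i\<in>UNIV. fst v $ i) * snd v" using assms by (simp add: prod_nonneg)
  have "((\<Prod>i\<in>UNIV. fst v $ i) * snd v) powr (1 / real (dim_of TYPE('m)))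
        \<le> (s ^ dim_of TYPE('m)) powr (1 / real (dim_of TYPE('m)))"
    using P P0 by (intro powr_mono2) (auto simp: dim_of_def mult.commute)
  also have "\<dots> = s" using s0 by (intro pow_powr_inv) (auto simp: dim_of_def)
  finally show ?thesis unfolding s_def .
qed

lemma adm_facts:
  assumes "admissible \<gamma>"
  shows "\<And>t. t \<in> {0..1} \<Longrightarrow> (\<gamma> has_vector_derivative curve_deriv \<gamma> t) (at t within {0..1})"
    "continuous_on {0..1} \<gamma>"
    "\<And>t. t \<in> {0..1} \<Longrightarrow> (\<forall>i. 0 \<le> fst (curve_deriv \<gamma> t) $ i) \<and> 0 \<le> snd (curve_deriv \<gamma> t)"
proof -
  show der: "(\<gamma> has_vector_derivative curve_deriv \<gamma> t) (at t within {0..1})" if "t \<in> {0..1}" for t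
    using assms that unfolding admissible_def curve_deriv_def
    by (auto simp: vector_derivative_works[symmetric])
  show "continuous_on {0..1} \<gamma>"
    unfolding continuous_on_eq_continuous_within using der has_vector_derivative_continuous by blast
  show "(\<forall>i. 0 \<le> fst (curve_deriv \<gamma> t) $ i) \<and> 0 \<le> snd (curve_deriv \<gamma> t)" if "t \<in> {0..1}" for t
    using assms that unfolding admissible_def by auto
qed

lemma J_upper:
  fixes f :: "(real^'m::finite) \<times> real \<Rightarrow> real"
  assumes f0: "\<forall>x. 0 \<le> f x" and fM: "\<forall>x. f x \<le> M" and fz: "\<forall>x. x \<notin> unit_cube \<longrightarrow> f x = 0"
    and adm: "admissible \<gamma>"
  shows "Jfun f \<gamma> \<le> M powr (1 / real (dim_of TYPE('m))) * real (dim_of TYPE('m))"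
proof -
  define e where "e = 1 / real (dim_of TYPE('m))"
  define d where "d = real (dim_of TYPE('m))"
  define g where "g t = f (\<gamma> t) powr e * ((\<Prod>i\<in>UNIV. fst (curve_deriv \<gamma> t) $ i) * snd (curve_deriv \<gamma> t)) powr e" for t
  have J: "Jfun f \<gamma> = integral {0..1} g" unfolding Jfun_def e_def by (simp add: g_def[abs_def] e_def)
  have M0: "M \<ge> 0" using f0 fM by (meson order_trans)
  have B0: "0 \<le> M powr e * d" unfolding d_def by simp
  note der = adm_facts(1)[OF adm] and cont = adm_facts(2)[OF adm] and dnn = adm_facts(3)[OF adm]
  show ?thesis
  proof (cases "g integrable_on {0..1}")
    case False
    thus ?thesis using J B0 by (simp add: not_integrable_integral e_def d_def)
  next
    case gi: True
    define S where "S = {t \<in> {0..1}. \<gamma> t \<in> unit_cube}"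
    show ?thesis
    proof (cases "S = {}")
      case True
      have g0: "g t = 0" if "t \<in> {0..1}" for t
      proof -
        have "f (\<gamma> t) = 0" using True fz that unfolding S_def by blast
        thus ?thesis by (simp add: g_def)
      qed
      have "integral {0..1} g = integral {0..1} (\<lambda>_. 0::real)"
        using integral_cong[of "{0..1}" g "\<lambda>_. 0"] g0 by simp
      thus ?thesis using J B0 by (simp add: e_def d_def)
    next
      case Sne: False
      define a where "a = Inf S"
      define b where "b = Sup S"
      have Ssub: "S \<subseteq> {0..1}" by (auto simp: S_def)
      have bb: "bdd_below S" "bdd_above S" using Ssub bdd_below_mono bdd_above_mono by (metis bdd_below_Icc, metis bdd_above_Icc)
      define K where "K = {x::(real^'m) \<times> real. (\<forall>i. 0 \<le> fst x $ i \<and> fst x $ i \<le> 1) \<and> 0 \<le> snd x \<and> snd x \<le> 1}"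
      have "closed K" unfolding K_def
        by (intro closed_Collect_conj closed_Collect_all closed_Collect_le continuous_intros)
      define T where "T = {0..1} \<inter> \<gamma> -` K"
      have "closed T" unfolding T_def by (rule continuous_closed_preimage[OF cont closed_atLeastAtMost \<open>closed K\<close>])
      have "S \<subseteq> T" by (auto simp: S_def T_def K_def unit_cube_def less_imp_le)
      hence clS: "closure S \<subseteq> T" using \<open>closed T\<close> by (rule closure_minimal)
      have aT: "a \<in> T" using closure_contains_Inf[OF Sne bb(1)] clS unfolding a_def by blast
      have bT: "b \<in> T" using closure_contains_Sup[OF Sne bb(2)] clS unfolding b_def by blast
      have ab: "a \<le> b" unfolding a_def b_def using Sne bb by (meson cInf_le_cSup)
      have tab: "t \<in> S \<Longrightarrow> a \<le> t \<and> t \<le> b" for t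
        unfolding a_def b_def using bb by (auto intro: cInf_lower cSup_upper)
      have ab01: "{a..b} \<subseteq> {0..1}" using aT bT by (auto simp: T_def)
      define l where "l x = M powr e * ((\<Sum>i\<in>UNIV. fst x $ i) + snd x)" for x :: "(real^'m) \<times> real"
      have bl: "bounded_linear l" unfolding l_def
        by (rule bounded_linear_compose[OF bounded_linear_mult_right lin_l])
      define h where "h t = (if t \<in> {a..b} then l (curve_deriv \<gamma> t) else 0)" for t
      have gh: "g t \<le> h t" if t: "t \<in> {0..1}" for t
      proof (cases "t \<in> {a..b}")
        case False
        hence "t \<notin> S" using tab by auto
        hence "\<gamma> t \<notin> unit_cube" using t by (auto simp: S_def)
        hence "f (\<gamma> t) = 0" using fz by blast
        hence "g t = 0" by (simp add: g_def)
        moreover have "h t = 0" using False unfolding h_def by auto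
        ultimately show ?thesis by simp
      next
        case True
        have "f (\<gamma> t) powr e \<le> M powr e"
          using f0[rule_format, of "\<gamma> t"] fM[rule_format, of "\<gamma> t"] by (intro powr_mono2) (auto simp: e_def)
        moreover have "((\<Prod>i\<in>UNIV. fst (curve_deriv \<gamma> t) $ i) * snd (curve_deriv \<gamma> t)) powr e
           \<le> (\<Sum>i\<in>UNIV. fst (curve_deriv \<gamma> t) $ i) + snd (curve_deriv \<gamma> t)"
          unfolding e_def using dnn[OF t] by (intro root_prod_le_sum) auto
        ultimately have "g t \<le> M powr e * ((\<Sum>i\<in>UNIV. fst (curve_deriv \<gamma> t) $ i) + snd (curve_deriv \<gamma> t))"
          unfolding g_def by (intro mult_mono) auto
        thus ?thesis using True by (simp add: h_def l_def)
      qed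
      have "((\<lambda>t. l (curve_deriv \<gamma> t)) has_integral (l (\<gamma> b) - l (\<gamma> a))) {a..b}"
      proof (rule fundamental_theorem_of_calculus[OF ab])
        fix t assume t: "t \<in> {a..b}"
        have "(\<gamma> has_vector_derivative curve_deriv \<gamma> t) (at t within {a..b})"
          using der[of t] t ab01 by (auto intro: has_vector_derivative_within_subset)
        thus "((\<lambda>t. l (\<gamma> t)) has_vector_derivative l (curve_deriv \<gamma> t)) (at t within {a..b})"
          by (rule bounded_linear.has_vector_derivative[OF bl])
      qed
      hence "(h has_integral (l (\<gamma> b) - l (\<gamma> a))) {0..1}"
        unfolding h_def using ab01 by (subst has_integral_restrict) auto
      hence "integral {0..1} g \<le> l (\<gamma> b) - l (\<gamma> a)"
        using gi gh by (metis has_integral_le integrable_integral)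
      also have "l (\<gamma> b) - l (\<gamma> a) = M powr e * ((\<Sum>i\<in>UNIV. fst (\<gamma> b) $ i - fst (\<gamma> a) $ i) + (snd (\<gamma> b) - snd (\<gamma> a)))"
        unfolding l_def by (simp add: sum_subtractf algebra_simps)
      also have "\<dots> \<le> M powr e * ((\<Sum>i\<in>(UNIV::'m set). 1) + 1)"
      proof (intro mult_left_mono add_mono sum_mono)
        show "fst (\<gamma> b) $ i - fst (\<gamma> a) $ i \<le> 1" for i
        proof -
          have "0 \<le> fst (\<gamma> a) $ i" "fst (\<gamma> b) $ i \<le> 1" using aT bT by (auto simp: T_def K_def)
          thus ?thesis by linarith
        qed
        show "snd (\<gamma> b) - snd (\<gamma> a) \<le> 1" using aT bT by (auto simp: T_def K_def)
      qed simp
      also have "\<dots> = M powr e * d" by (simp add: d_def dim_of_def)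
      finally show ?thesis using J unfolding e_def d_def by simp
    qed
  qed
qed

lemma cd_cont: "admissible \<gamma> \<Longrightarrow> continuous_on {0..1} (curve_deriv \<gamma>)"
  by (simp add: admissible_def)

lemma J_integrable:
  fixes f :: "(real^'m::finite) \<times> real \<Rightarrow> real"
  assumes fb: "f \<in> borel_measurable borel" and f0: "\<forall>x. 0 \<le> f x" and fM: "\<forall>x. f x \<le> M"
    and adm: "admissible \<gamma>"
  shows "(\<lambda>t. f (\<gamma> t) powr (1 / real (dim_of TYPE('m))) *
     ((\<Prod>i\<in>UNIV. fst (curve_deriv \<gamma> t) $ i) * snd (curve_deriv \<gamma> t)) powr (1 / real (dim_of TYPE('m))))
     integrable_on {0..1}" (is "?g integrable_on _")
proof -
  define e where "e = 1 / real (dim_of TYPE('m))"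
  have m1: "\<gamma> \<in> borel_measurable (lebesgue_on {0..1})"
    by (rule continuous_imp_measurable_on_sets_lebesgue[OF adm_facts(2)[OF adm]]) auto
  have m2: "(\<lambda>t. f (\<gamma> t)) \<in> borel_measurable (lebesgue_on {0..1})"
    by (rule measurable_compose[OF m1 fb])
  have cP: "continuous_on {0..1} (\<lambda>t. (\<Prod>i\<in>UNIV. fst (curve_deriv \<gamma> t) $ i) * snd (curve_deriv \<gamma> t))"
    using cd_cont[OF adm] by (intro continuous_intros) auto
  have m3: "(\<lambda>t. (\<Prod>i\<in>UNIV. fst (curve_deriv \<gamma> t) $ i) * snd (curve_deriv \<gamma> t)) \<in> borel_measurable (lebesgue_on {0..1})"
    by (rule continuous_imp_measurable_on_sets_lebesgue[OF cP]) auto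
  have gm: "?g \<in> borel_measurable (lebesgue_on {0..1})"
    using m2 m3 by measurable
  define s where "s t = M powr e * ((\<Sum>i\<in>UNIV. fst (curve_deriv \<gamma> t) $ i) + snd (curve_deriv \<gamma> t))" for t
  have cs: "continuous_on {0..1} s"
    unfolding s_def using cd_cont[OF adm] by (intro continuous_intros) auto
  have bnd: "norm (?g t) \<le> s t" if t: "t \<in> {0..1}" for t
  proof -
    have "f (\<gamma> t) powr e \<le> M powr e"
      using f0[rule_format, of "\<gamma> t"] fM[rule_format, of "\<gamma> t"] by (intro powr_mono2) (auto simp: e_def)
    moreover have "((\<Prod>i\<in>UNIV. fst (curve_deriv \<gamma> t) $ i) * snd (curve_deriv \<gamma> t)) powr e
           \<le> (\<Sum>i\<in>UNIV. fst (curve_deriv \<gamma> t) $ i) + snd (curve_deriv \<gamma> t)"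
      unfolding e_def using adm_facts(3)[OF adm t] by (intro root_prod_le_sum) auto
    ultimately have "?g t \<le> s t"
      unfolding s_def e_def by (intro mult_mono) auto
    thus ?thesis by simp
  qed
  have "?g absolutely_integrable_on {0..1}"
    by (rule measurable_bounded_by_integrable_imp_absolutely_integrable[OF gm _ integrable_continuous_interval[OF cs] bnd]) auto
  thus ?thesis by (simp add: absolutely_integrable_on_def)
qed

lemma Jbar_ge:
  fixes f :: "(real^'m::finite) \<times> real \<Rightarrow> real"
  assumes f0: "\<forall>x. 0 \<le> f x" and fM: "\<forall>x. f x \<le> M" and fz: "\<forall>x. x \<notin> unit_cube \<longrightarrow> f x = 0"
    and adm: "admissible \<gamma>"
  shows "Jfun f \<gamma> \<le> Jbar f"
proof -
  have "bdd_above (Jfun f ` {\<gamma>. admissible \<gamma>})"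
    using J_upper[OF f0 fM fz] by (intro bdd_aboveI) blast
  thus ?thesis unfolding Jbar_def using adm by (intro cSup_upper) auto
qed

lemma dpsi_others:
  assumes "0 < real k * t - real (j0 - 1)" "real k * t - real (j0 - 1) < 1" "j \<noteq> j0" "j \<ge> 1" "j0 \<ge> 1"
  shows "dpsi m (real k * t - real (j - 1)) = 0"
proof (rule dpsi_out)
  have e: "real k * t - real (j - 1) = (real k * t - real (j0 - 1)) + (real j0 - real j)"
    using assms(4,5) by (simp add: of_nat_diff)
  show "real k * t - real (j - 1) \<le> 0 \<or> 1 \<le> real k * t - real (j - 1)"
  proof (cases "j < j0")
    case True
    hence "real j0 - real j \<ge> 1" by linarith
    thus ?thesis using e assms(1) by linarith
  next
    case False
    hence "real j0 - real j \<le> -1" using assms(3) by linarith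
    thus ?thesis using e assms(2) by linarith
  qed
qed

lemma sum_dpsi_single:
  assumes "0 < real k * t - real (j0 - 1)" "real k * t - real (j0 - 1) < 1" "j0 \<in> A" "finite A" "\<forall>j\<in>A. j \<ge> 1"
  shows "(\<Sum>j\<in>A. F j * dpsi m (real k * t - real (j - 1))) = F j0 * dpsi m (real k * t - real (j0 - 1))"
proof -
  have "(\<Sum>j\<in>A. F j * dpsi m (real k * t - real (j - 1))) = (\<Sum>j\<in>A. if j = j0 then F j0 * dpsi m (real k * t - real (j0 - 1)) else 0)"
    using dpsi_others[OF assms(1,2)] assms(3,5) by (intro sum.cong) auto
  also have "\<dots> = F j0 * dpsi m (real k * t - real (j0 - 1))" using assms(3,4) by simp
  finally show ?thesis .
qed

lemma sum_dpsi_none: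
  assumes "\<forall>j\<in>A. \<not> (0 < real k * t - real (j - 1) \<and> real k * t - real (j - 1) < 1)"
  shows "(\<Sum>j\<in>A. F j * dpsi m (real k * t - real (j - 1))) = 0"
  using assms dpsi_out by (intro sum.neutral) (metis linorder_not_le mult_zero_right)

lemma root_pow_bound:
  fixes x a :: real
  assumes "0 \<le> x" "x \<le> a" "n > 0"
  shows "x / a powr (1 / real n) \<le> (x ^ (n - 1)) powr (1 / real n)"
proof (cases "x = 0")
  case True thus ?thesis by simp
next
  case False
  hence xp: "x > 0" using assms by simp
  hence ap: "a > 0" using assms by simp
  have "x = x powr (real (n - 1) / real n) * x powr (1 / real n)"
    using xp assms(3) by (simp add: powr_add[symmetric] of_nat_diff add_divide_distrib[symmetric])
  also have "\<dots> \<le> x powr (real (n - 1) / real n) * a powr (1 / real n)"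
    using assms xp by (intro mult_left_mono powr_mono2) auto
  finally have "x / a powr (1 / real n) \<le> x powr (real (n - 1) / real n)"
    using ap by (simp add: divide_le_eq)
  also have "x powr (real (n - 1) / real n) = (x ^ (n - 1)) powr (1 / real n)"
    using xp by (simp add: powr_realpow[symmetric] powr_powr)
  finally show ?thesis .
qed

lemma J_lower:
  fixes f :: "(real^'m::finite) \<times> real \<Rightarrow> real" and W :: "nat \<Rightarrow> (real^'m) \<times> real"
  assumes m1: "m \<ge> 1" and k1: "k \<ge> 1"
    and fb: "f \<in> borel_measurable borel" and f0: "\<forall>x. 0 \<le> f x" and fM: "\<forall>x. f x \<le> M"
    and Wn: "\<forall>j i. 0 \<le> fst (W j) $ i" and Ws: "\<forall>j. snd (W j) = 0"
    and G: "G \<subseteq> {1..k}"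
    and fc: "\<forall>j\<in>G. \<forall>t. 0 < real k * t - real (j - 1) \<and> real k * t - real (j - 1) < 1 \<longrightarrow> f (gam m k W t) = c j"
    and c0: "\<forall>j. 0 \<le> c j"
  shows "(\<Sum>j\<in>G. c j powr (1 / real (dim_of TYPE('m))) * (\<Prod>i\<in>UNIV. real k * fst (W j) $ i) powr (1 / real (dim_of TYPE('m)))
            / pa m powr (1 / real (dim_of TYPE('m)))) / real k \<le> Jfun f (gam m k W)"
proof -
  define n where "n = dim_of TYPE('m)"
  define e where "e = 1 / real n"
  have n1: "n - 1 = CARD('m)" "n > 0" by (simp_all add: n_def dim_of_def)
  define A where "A j = c j powr e * (\<Prod>i\<in>UNIV. real k * fst (W j) $ i) powr e / pa m powr e" for j
  define h where "h t = (\<Sum>j\<in>G. A j * dpsi m (real k * t - real (j - 1)))" for t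
  define g where "g t = f (gam m k W t) powr e *
     ((\<Prod>i\<in>UNIV. fst (curve_deriv (gam m k W) t) $ i) * snd (curve_deriv (gam m k W) t)) powr e" for t
  have adm: "admissible (gam m k W)" by (rule admissible_gam[OF m1]) (use Wn Ws in auto)
  have J: "Jfun f (gam m k W) = integral {0..1} g" unfolding Jfun_def by (simp add: g_def[abs_def] e_def n_def)
  have gi: "g integrable_on {0..1}" unfolding g_def[abs_def] e_def n_def by (rule J_integrable[OF fb f0 fM adm])
  have finG: "finite G" using G finite_subset by blast
  have G1: "\<forall>j\<in>G. j \<ge> 1" using G by auto
  have hg: "h t \<le> g t" if t: "t \<in> {0..1}" for t
  proof (cases "\<exists>j0\<in>G. 0 < real k * t - real (j0 - 1) \<and> real k * t - real (j0 - 1) < 1")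
    case True
    then obtain j0 where j0: "j0 \<in> G" "0 < real k * t - real (j0 - 1)" "real k * t - real (j0 - 1) < 1" by blast
    define s where "s = real k * t - real (j0 - 1)"
    have j0k: "j0 \<in> {1..k}" using j0 G by auto
    have hs: "h t = A j0 * dpsi m s"
      unfolding h_def s_def by (rule sum_dpsi_single[OF j0(2,3) j0(1) finG G1])
    have cd: "curve_deriv (gam m k W) t = dgam m k W t" by (rule curve_deriv_gam[OF m1 t])
    have fst_cd: "fst (curve_deriv (gam m k W) t) $ i = dpsi m s * (real k * fst (W j0) $ i)" for i
    proof -
      have "fst (curve_deriv (gam m k W) t) $ i = (\<Sum>j\<in>{1..k}. (real k * fst (W j) $ i) * dpsi m (real k * t - real (j - 1)))"
        unfolding cd fst_dgam by (intro sum.cong) auto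
      also have "\<dots> = (real k * fst (W j0) $ i) * dpsi m s"
        unfolding s_def by (rule sum_dpsi_single[OF j0(2,3) j0k]) auto
      finally show ?thesis by simp
    qed
    have snd_cd: "snd (curve_deriv (gam m k W) t) = 1" unfolding cd snd_dgam using Ws by simp
    have fg: "f (gam m k W t) = c j0" using fc j0 by blast
    have ds: "0 \<le> dpsi m s" "dpsi m s \<le> pa m" using dpsi_nonneg[OF m1] dpsi_le[OF m1] by auto
    define P where "P = (\<Prod>i\<in>UNIV. real k * fst (W j0) $ i)"
    have P0: "P \<ge> 0" unfolding P_def using Wn by (intro prod_nonneg) auto
    have prodeq: "(\<Prod>i\<in>UNIV. fst (curve_deriv (gam m k W) t) $ i) * snd (curve_deriv (gam m k W) t)
        = dpsi m s ^ (n - 1) * P"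
      unfolding fst_cd snd_cd P_def n1 by (simp add: prod.distrib)
    have "g t = c j0 powr e * (dpsi m s ^ (n - 1)) powr e * P powr e"
      unfolding g_def fg prodeq using ds P0 by (simp add: powr_mult)
    moreover have "dpsi m s / pa m powr e \<le> (dpsi m s ^ (n - 1)) powr e"
      unfolding e_def by (rule root_pow_bound[OF ds n1(2)])
    hence "c j0 powr e * P powr e * (dpsi m s / pa m powr e) \<le> c j0 powr e * P powr e * (dpsi m s ^ (n - 1)) powr e"
      by (intro mult_left_mono) auto
    ultimately have "c j0 powr e * P powr e * (dpsi m s / pa m powr e) \<le> g t" by (simp add: ac_simps)
    moreover have "h t = c j0 powr e * P powr e * (dpsi m s / pa m powr e)"
      unfolding hs A_def P_def by simp
    ultimately show ?thesis by simp
  next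
    case False
    hence "h t = 0" unfolding h_def by (intro sum_dpsi_none) auto
    moreover have "g t \<ge> 0" unfolding g_def by simp
    ultimately show ?thesis by simp
  qed
  define H where "H t = (\<Sum>j\<in>G. A j * psi m (real k * t - real (j - 1)) / real k)" for t
  have "(h has_integral (H 1 - H 0)) {0..1}"
  proof (rule fundamental_theorem_of_calculus)
    fix t :: real
    have P: "((\<lambda>t. psi m (real k * t - real (j - 1))) has_real_derivative (real k * dpsi m (real k * t - real (j - 1)))) (at t within {0..1})" for j
    proof -
      have "((\<lambda>t. real k * t - real (j - 1)) has_real_derivative real k) (at t)"
        by (auto intro!: derivative_eq_intros)
      from DERIV_chain2[OF psi_deriv[OF m1] this]
      show ?thesis by (simp add: mult.commute has_field_derivative_at_within)
    qed
    have "(H has_real_derivative (\<Sum>j\<in>G. A j * (real k * dpsi m (real k * t - real (j - 1))) / real k)) (at t within {0..1})"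
      unfolding H_def by (rule DERIV_sum, rule DERIV_cdivide[OF DERIV_cmult[OF P]])
    moreover have "(\<Sum>j\<in>G. A j * (real k * dpsi m (real k * t - real (j - 1))) / real k) = h t"
      unfolding h_def using k1 by (intro sum.cong) auto
    ultimately show "(H has_vector_derivative h t) (at t within {0..1})"
      by (simp add: has_real_derivative_iff_has_vector_derivative)
  qed simp
  moreover have "H 1 = (\<Sum>j\<in>G. A j) / real k"
  proof -
    have "H 1 = (\<Sum>j\<in>G. A j / real k)"
      unfolding H_def using G m1 by (intro sum.cong refl) (auto simp: psi_ge1 of_nat_diff)
    thus ?thesis by (simp add: sum_divide_distrib)
  qed
  moreover have "H 0 = 0" unfolding H_def using psi_le0 by simp
  ultimately have hi: "(h has_integral (\<Sum>j\<in>G. A j) / real k) {0..1}" by simp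
  have "(\<Sum>j\<in>G. A j) / real k \<le> integral {0..1} g"
    using has_integral_le[OF hi integrable_integral[OF gi] hg] .
  thus ?thesis unfolding J A_def e_def n_def .
qed

definition idx :: "nat \<Rightarrow> (real^'m::finite) \<times> real \<Rightarrow> (nat^'m) \<times> nat" where
  "idx L x = ((\<chi> i. nat \<lfloor>real L * fst x $ i\<rfloor> + 1), nat \<lfloor>real L * snd x\<rfloor> + 1)"

definition corner :: "nat \<Rightarrow> (nat^'m::finite) \<times> nat \<Rightarrow> (real^'m) \<times> real" where
  "corner L \<alpha> = ((\<chi> i. (real (fst \<alpha> $ i) - 1) / real L), (real (snd \<alpha>) - 1) / real L)"

definition cval :: "nat \<Rightarrow> ((real^'m::finite) \<times> real \<Rightarrow> real) \<Rightarrow> (nat^'m) \<times> nat \<Rightarrow> real" where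
  "cval L f \<alpha> = f (corner L \<alpha>)"

lemma floor_props:
  assumes "0 \<le> y" "y < real L"
  shows "nat \<lfloor>y\<rfloor> + 1 \<le> L" "real (nat \<lfloor>y\<rfloor> + 1) - 1 \<le> y" "y < real (nat \<lfloor>y\<rfloor> + 1)"
proof -
  have "\<lfloor>y\<rfloor> \<ge> 0" using assms by simp
  have "\<lfloor>y\<rfloor> < int L" using assms by (simp add: floor_less_iff)
  hence "nat \<lfloor>y\<rfloor> < L" using nat_less_iff[OF \<open>\<lfloor>y\<rfloor> \<ge> 0\<close>] by simp
  thus "nat \<lfloor>y\<rfloor> + 1 \<le> L" by simp
  have "real (nat \<lfloor>y\<rfloor>) = of_int \<lfloor>y\<rfloor>" using \<open>\<lfloor>y\<rfloor> \<ge> 0\<close> by simp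
  thus "real (nat \<lfloor>y\<rfloor> + 1) - 1 \<le> y" "y < real (nat \<lfloor>y\<rfloor> + 1)"
    by (simp_all add: of_int_floor_le) linarith
qed

lemma unit_cube_iff: "x \<in> unit_cube \<longleftrightarrow> (\<forall>i. 0 \<le> fst x $ i \<and> fst x $ i < 1) \<and> 0 \<le> snd x \<and> snd x < 1"
  by (simp add: unit_cube_def)

lemma idx_props:
  assumes "L \<ge> 1" "x \<in> unit_cube"
  shows "valid_index L (idx L x)" "x \<in> Qcube L (idx L x)"
proof -
  have L: "real L \<ge> 1" using assms by simp
  have c: "0 \<le> real L * fst x $ i" "real L * fst x $ i < real L" for i
    using assms(2) L by (auto simp: unit_cube_iff)
  have s: "0 \<le> real L * snd x" "real L * snd x < real L"
    using assms(2) L by (auto simp: unit_cube_iff)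
  show "valid_index L (idx L x)"
    unfolding valid_index_def idx_def using floor_props(1)[OF c] floor_props(1)[OF s] by simp
  show "x \<in> Qcube L (idx L x)"
    unfolding Qcube_def idx_def using floor_props(2,3)[OF c] floor_props(2,3)[OF s] assms(2) by simp
qed

lemma Q_idx:
  assumes "x \<in> Qcube L \<alpha>"
  shows "\<alpha> = idx L x"
proof -
  have u: "x \<in> unit_cube" using assms by (simp add: Qcube_def)
  have L0: "real L \<ge> 0" by simp
  have key: "nat \<lfloor>y\<rfloor> + 1 = a" if "real a - 1 \<le> y" "y < real a" "0 \<le> y" for a :: nat and y :: real
  proof -
    have "\<lfloor>y\<rfloor> = int a - 1" using that by (simp add: floor_eq_iff)
    moreover have "a \<ge> 1" using that by linarith
    ultimately show ?thesis by simp
  qed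
  have "fst \<alpha> $ i = nat \<lfloor>real L * fst x $ i\<rfloor> + 1" for i
    using assms u by (intro key[symmetric]) (auto simp: Qcube_def unit_cube_iff)
  moreover have "snd \<alpha> = nat \<lfloor>real L * snd x\<rfloor> + 1"
    using assms u by (intro key[symmetric]) (auto simp: Qcube_def unit_cube_iff)
  ultimately show ?thesis unfolding idx_def by (simp add: prod_eq_iff vec_eq_iff)
qed

lemma corner_in:
  assumes "L \<ge> 1" "valid_index L \<alpha>"
  shows "corner L \<alpha> \<in> Qcube L \<alpha>"
proof -
  have L: "real L > 0" using assms by simp
  have A: "1 \<le> real (fst \<alpha> $ i)" "real (fst \<alpha> $ i) \<le> real L" for i
    using assms(2) unfolding valid_index_def by auto
  have B: "1 \<le> real (snd \<alpha>)" "real (snd \<alpha>) \<le> real L"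
    using assms(2) unfolding valid_index_def by auto
  have A3: "real (fst \<alpha> $ i) < 1 + real L" for i using A(2)[of i] by linarith
  show ?thesis
    unfolding Qcube_def unit_cube_iff corner_def using L A B A3
    by (auto simp: field_simps)
qed

lemma f_on_Q:
  assumes "L \<ge> 1" "piecewise_constant L f" "valid_index L \<alpha>" "x \<in> Qcube L \<alpha>"
  shows "f x = cval L f \<alpha>"
proof -
  obtain c where "\<forall>y\<in>Qcube L \<alpha>. f y = c" using assms unfolding piecewise_constant_def by blast
  thus ?thesis using corner_in[OF assms(1,3)] assms(4) by (simp add: cval_def)
qed

lemma finite_vecs: "finite {v :: nat^'m::finite. \<forall>i. v $ i \<le> N}"
proof -
  have "{v :: nat^'m. \<forall>i. v $ i \<le> N} \<subseteq> vec_lambda ` (PiE UNIV (\<lambda>_. {..N}))"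
  proof
    fix v :: "nat^'m" assume "v \<in> {v. \<forall>i. v $ i \<le> N}"
    hence "vec_nth v \<in> PiE UNIV (\<lambda>_. {..N})" by auto
    thus "v \<in> vec_lambda ` (PiE UNIV (\<lambda>_. {..N}))" by (metis image_eqI vec_nth_inverse)
  qed
  thus ?thesis by (rule finite_subset) (intro finite_imageI finite_PiE, auto)
qed

lemma finite_valid: "finite {\<alpha> :: (nat^'m::finite) \<times> nat. valid_index L \<alpha>}"
proof -
  have "{\<alpha> :: (nat^'m) \<times> nat. valid_index L \<alpha>} \<subseteq> {v. \<forall>i. v $ i \<le> L} \<times> {..L}"
    by (auto simp: valid_index_def)
  thus ?thesis by (rule finite_subset) (intro finite_cartesian_product finite_vecs, auto)
qed

lemma comp_borel[measurable]: "(\<lambda>x::(real^'m::finite) \<times> real. fst x $ i) \<in> borel_measurable borel"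
  by (intro borel_measurable_continuous_onI continuous_intros)
lemma snd_borel[measurable]: "(\<lambda>x::(real^'m::finite) \<times> real. snd x) \<in> borel_measurable borel"
  by (intro borel_measurable_continuous_onI continuous_intros)

lemma unit_cube_borel: "unit_cube \<in> sets (borel :: ((real^'m::finite) \<times> real) measure)"
proof -
  have "unit_cube = {x::(real^'m) \<times> real. (\<forall>i. 0 \<le> fst x $ i \<and> fst x $ i < 1) \<and> 0 \<le> snd x \<and> snd x < 1}"
    by (simp add: unit_cube_def)
  also have "\<dots> \<in> sets borel" by measurable
  finally show ?thesis .
qed

lemma Qcube_borel: "Qcube L \<alpha> \<in> sets (borel :: ((real^'m::finite) \<times> real) measure)"
proof -
  have "Qcube L \<alpha> = unit_cube \<inter> {x::(real^'m) \<times> real.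
     (\<forall>i. real (fst \<alpha> $ i) - 1 \<le> real L * fst x $ i \<and> real L * fst x $ i < real (fst \<alpha> $ i)) \<and>
     real (snd \<alpha>) - 1 \<le> real L * snd x \<and> real L * snd x < real (snd \<alpha>)}"
    by (auto simp: Qcube_def)
  also have "\<dots> \<in> sets borel" using unit_cube_borel by measurable
  finally show ?thesis .
qed

lemma f_rep:
  fixes f :: "(real^'m::finite) \<times> real \<Rightarrow> real"
  assumes "L \<ge> 1" "piecewise_constant L f" "\<forall>x. x \<notin> unit_cube \<longrightarrow> f x = 0"
  shows "f x = (\<Sum>\<alpha>\<in>{\<alpha>. valid_index L \<alpha>}. cval L f \<alpha> * indicator (Qcube L \<alpha>) x)"
proof (cases "x \<in> unit_cube")
  case True
  have "(\<Sum>\<alpha>\<in>{\<alpha>. valid_index L \<alpha>}. cval L f \<alpha> * indicator (Qcube L \<alpha>) x)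
      = (\<Sum>\<alpha>\<in>{\<alpha>. valid_index L \<alpha>}. if \<alpha> = idx L x then cval L f \<alpha> else 0)"
  proof (intro sum.cong refl)
    fix \<alpha> :: "(nat^'m) \<times> nat" assume "\<alpha> \<in> {\<alpha>. valid_index L \<alpha>}"
    show "cval L f \<alpha> * indicator (Qcube L \<alpha>) x = (if \<alpha> = idx L x then cval L f \<alpha> else 0)"
    proof (cases "\<alpha> = idx L x")
      case True thus ?thesis using idx_props[OF assms(1) \<open>x \<in> unit_cube\<close>] by simp
    next
      case False
      hence "x \<notin> Qcube L \<alpha>" using Q_idx[of x L \<alpha>] by auto
      thus ?thesis using False by simp
    qed
  qed
  also have "\<dots> = cval L f (idx L x)"
    using idx_props[OF assms(1) True] finite_valid by (subst sum.delta) auto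
  also have "\<dots> = f x" using f_on_Q[OF assms(1,2)] idx_props[OF assms(1) True] by simp
  finally show ?thesis by simp
next
  case False
  hence "x \<notin> Qcube L \<alpha>" for \<alpha> by (auto simp: Qcube_def)
  moreover have "f x = 0" using assms(3) False by blast
  ultimately show ?thesis by simp
qed

lemma f_borel:
  assumes "L \<ge> 1" "piecewise_constant L f" "\<forall>x. x \<notin> unit_cube \<longrightarrow> f x = 0"
  shows "f \<in> borel_measurable borel"
proof -
  have "(\<lambda>x. \<Sum>\<alpha>\<in>{\<alpha>. valid_index L \<alpha>}. cval L f \<alpha> * indicator (Qcube L \<alpha>) x) \<in> borel_measurable borel"
    using Qcube_borel by measurable
  moreover have "f = (\<lambda>x. \<Sum>\<alpha>\<in>{\<alpha>. valid_index L \<alpha>}. cval L f \<alpha> * indicator (Qcube L \<alpha>) x)"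
    using f_rep[OF assms] by (intro ext)
  ultimately show ?thesis by simp
qed

lemma cval_nonneg:
  assumes "L \<ge> 1" "valid_index L \<alpha>" "\<forall>x\<in>unit_cube. 0 \<le> f x"
  shows "cval L f \<alpha> \<ge> 0"
  using corner_in[OF assms(1,2)] assms(3) by (auto simp: cval_def Qcube_def)

definition fM :: "nat \<Rightarrow> ((real^'m::finite) \<times> real \<Rightarrow> real) \<Rightarrow> real" where
  "fM L f = (\<Sum>\<alpha>\<in>{\<alpha>::(nat^'m) \<times> nat. valid_index L \<alpha>}. cval L f \<alpha>)"

lemma f_bound:
  assumes "L \<ge> 1" "piecewise_constant L f" "\<forall>x. x \<notin> unit_cube \<longrightarrow> f x = 0" "\<forall>x\<in>unit_cube. 0 \<le> f x"
  shows "0 \<le> f x" "f x \<le> fM L f" "0 \<le> fM L f"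
proof -
  show "0 \<le> f x" using assms(3,4) by (metis order_refl)
  show "0 \<le> fM L f" unfolding fM_def using cval_nonneg[OF assms(1) _ assms(4)] by (intro sum_nonneg) auto
  show "f x \<le> fM L f"
    unfolding f_rep[OF assms(1-3), of x] fM_def
    using cval_nonneg[OF assms(1) _ assms(4)] finite_valid
    by (intro sum_mono) (auto simp: indicator_def)
qed

lemma open_unit_cube_borel: "open_unit_cube \<in> sets (borel :: ((real^'m::finite) \<times> real) measure)"
proof -
  have "open_unit_cube = {x::(real^'m) \<times> real. (\<forall>i. 0 < fst x $ i \<and> fst x $ i < 1) \<and> 0 < snd x \<and> snd x < 1}"
    by (simp add: open_unit_cube_def)
  also have "\<dots> \<in> sets borel" by measurable
  finally show ?thesis .
qed

lemma ball_in_Q: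
  fixes \<alpha> :: "(nat^'m::finite) \<times> nat"
  assumes L: "L \<ge> 1" and v: "valid_index L \<alpha>"
  defines "p \<equiv> ((\<chi> i. (real (fst \<alpha> $ i) - 1/2) / real L), (real (snd \<alpha>) - 1/2) / real L)"
  shows "ball p (1 / (2 * real L)) \<subseteq> Qcube L \<alpha> \<inter> open_unit_cube"
proof
  fix x assume "x \<in> ball p (1 / (2 * real L))"
  hence d: "norm (x - p) < 1 / (2 * real L)" by (simp add: dist_norm norm_minus_commute)
  have Lp: "real L > 0" using L by simp
  have ci: "\<bar>fst x $ i - fst p $ i\<bar> < 1 / (2 * real L)" for i
  proof -
    have "\<bar>fst x $ i - fst p $ i\<bar> = \<bar>fst (x - p) $ i\<bar>" by simp
    also have "\<dots> \<le> norm (fst (x - p))" by (rule component_le_norm_cart)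
    also have "\<dots> \<le> norm (x - p)" by (metis norm_fst_le prod.collapse)
    finally show ?thesis using d by linarith
  qed
  have cs: "\<bar>snd x - snd p\<bar> < 1 / (2 * real L)"
  proof -
    have "\<bar>snd x - snd p\<bar> = norm (snd (x - p))" by simp
    also have "\<dots> \<le> norm (x - p)" by (metis norm_snd_le prod.collapse)
    finally show ?thesis using d by linarith
  qed
  have A: "1 \<le> real (fst \<alpha> $ i)" "real (fst \<alpha> $ i) \<le> real L" for i
    using v unfolding valid_index_def by auto
  have B: "1 \<le> real (snd \<alpha>)" "real (snd \<alpha>) \<le> real L"
    using v unfolding valid_index_def by auto
  have key: "real a - 1 < real L * y \<and> real L * y < real a \<and> 0 < y \<and> y < 1"
    if "\<bar>y - (real a - 1/2) / real L\<bar> < 1 / (2 * real L)" "1 \<le> real a" "real a \<le> real L" for y a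
  proof -
    have "\<bar>real L * y - (real a - 1/2)\<bar> < 1/2"
    proof -
      have "\<bar>real L * y - (real a - 1/2)\<bar> = real L * \<bar>y - (real a - 1/2) / real L\<bar>"
      proof -
        have "real L * y - (real a - 1/2) = real L * (y - (real a - 1/2) / real L)"
          using Lp by (simp add: field_simps)
        thus ?thesis using Lp by (simp add: abs_mult)
      qed
      also have "\<dots> < real L * (1 / (2 * real L))" using that(1) Lp by (intro mult_strict_left_mono) auto
      also have "\<dots> = 1/2" using Lp by simp
      finally show ?thesis .
    qed
    hence "real a - 1 < real L * y" "real L * y < real a" unfolding abs_less_iff by auto
    moreover have "0 < y" using \<open>real a - 1 < real L * y\<close> that(2) Lp
      by (metis diff_ge_0_iff_ge order_le_less_trans zero_less_mult_pos)
    moreover have "real L * y < real L * 1" using \<open>real L * y < real a\<close> that(3) by simp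
    hence "y < 1" using Lp by simp
    ultimately show ?thesis by simp
  qed
  have ki: "real (fst \<alpha> $ i) - 1 < real L * fst x $ i \<and> real L * fst x $ i < real (fst \<alpha> $ i) \<and> 0 < fst x $ i \<and> fst x $ i < 1" for i
    using key[OF _ A(1,2)[of i], of "fst x $ i"] ci[of i] by (simp add: p_def)
  have ks: "real (snd \<alpha>) - 1 < real L * snd x \<and> real L * snd x < real (snd \<alpha>) \<and> 0 < snd x \<and> snd x < 1"
    using key[OF _ B, of "snd x"] cs by (simp add: p_def)
  show "x \<in> Qcube L \<alpha> \<inter> open_unit_cube"
    using ki ks by (auto simp: Qcube_def unit_cube_def open_unit_cube_def less_imp_le)
qed

lemma cval_le_Linf:
  fixes f :: "(real^'m::finite) \<times> real \<Rightarrow> real"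
  assumes L: "L \<ge> 1" and pc: "piecewise_constant L f" and fz: "\<forall>x. x \<notin> unit_cube \<longrightarrow> f x = 0"
    and f0: "\<forall>x\<in>unit_cube. 0 \<le> f x" and v: "valid_index L \<alpha>"
  shows "cval L f \<alpha> \<le> real_of_ereal (Linf_norm f)"
proof -
  define N where "N = restrict_space (lborel :: ((real^'m) \<times> real) measure) open_unit_cube"
  define F where "F x = ereal \<bar>f x\<bar>" for x
  define E where "E = esssup N F"
  have EL: "Linf_norm f = E" by (simp add: Linf_norm_def E_def N_def F_def[abs_def])
  have fb: "f \<in> borel_measurable borel" by (rule f_borel[OF L pc fz])
  have Fm: "F \<in> borel_measurable N"
    unfolding N_def F_def by (rule measurable_restrict_space1) (use fb in measurable)
  have "E \<le> ereal (fM L f)"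
    unfolding E_def
  proof (rule esssup_I[OF Fm])
    show "AE x in N. F x \<le> ereal (fM L f)"
      using f_bound[OF L pc fz f0] by (intro AE_I2) (simp add: F_def)
  qed
  have c0: "cval L f \<alpha> \<ge> 0" by (rule cval_nonneg[OF L v f0])
  have "ereal (cval L f \<alpha>) \<le> E"
  proof (rule ccontr)
    assume "\<not> ereal (cval L f \<alpha>) \<le> E"
    hence lt: "E < ereal (cval L f \<alpha>)" by simp
    have "AE x in N. F x \<le> E" unfolding E_def by (rule esssup_AE)
    hence "AE x in N. F x < ereal (cval L f \<alpha>)" using lt by (auto elim: eventually_mono)
    hence "AE x in lborel. x \<in> open_unit_cube \<longrightarrow> F x < ereal (cval L f \<alpha>)"
      unfolding N_def using open_unit_cube_borel by (subst (asm) AE_restrict_space_iff) auto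
    moreover
    define p where "p = ((\<chi> i. (real (fst \<alpha> $ i) - 1/2) / real L), (real (snd \<alpha>) - 1/2) / real L)"
    define B where "B = ball p (1 / (2 * real L))"
    have BQ: "B \<subseteq> Qcube L \<alpha> \<inter> open_unit_cube" unfolding B_def p_def by (rule ball_in_Q[OF L v])
    ultimately have "AE x in lborel. x \<notin> B"
    proof (elim eventually_mono)
      fix x assume h: "x \<in> open_unit_cube \<longrightarrow> F x < ereal (cval L f \<alpha>)"
      show "x \<notin> B"
      proof
        assume "x \<in> B"
        hence "x \<in> open_unit_cube" "x \<in> Qcube L \<alpha>" using BQ by auto
        hence "x \<in> open_unit_cube" "f x = cval L f \<alpha>" using f_on_Q[OF L pc v] by auto
        thus False using h c0 by (simp add: F_def)
      qed
    qed
    hence "emeasure lborel B = 0"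
      by (subst (asm) AE_iff_measurable[where N=B]) (auto simp: B_def)
    moreover have "measure lborel B > 0" unfolding B_def using L by (intro content_ball_pos) simp
    ultimately show False by (simp add: measure_def)
  qed
  then obtain r where Er: "E = ereal r" "cval L f \<alpha> \<le> r"
    using \<open>E \<le> ereal (fM L f)\<close> by (cases E) auto
  thus ?thesis using EL by simp
qed

definition Bv :: "(nat \<Rightarrow> nat^'m::finite) \<Rightarrow> nat \<Rightarrow> nat^'m" where
  "Bv b j = (if j = 0 then 0 else b j)"

lemma zpt_fst: "fst (zpt k1 k2 b j) $ i = real (Bv b j $ i) * (1 / real k1 / real k2)"
  by (simp add: zpt_def Bv_def)
lemma zpt_snd: "snd (zpt k1 k2 b j) = real j * (1 / real k1)"
  by (simp add: zpt_def)

lemma Bv_mono: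
  assumes "b \<in> Phi k1 k2" "1 \<le> j" "j \<le> k1"
  shows "Bv b (j - 1) $ i \<le> Bv b j $ i"
proof (cases "j = 1")
  case True thus ?thesis by (simp add: Bv_def)
next
  case False
  from assms(1) have P: "\<forall>j\<in>{1..k1}. \<forall>j'\<in>{1..k1}. j \<le> j' \<longrightarrow> (\<forall>i. b j $ i \<le> b j' $ i)" by (simp add: Phi_def)
  have "j - 1 \<in> {1..k1}" "j \<in> {1..k1}" using assms False by auto
  hence "b (j - 1) $ i \<le> b j $ i" using P by (meson diff_le_self)
  thus ?thesis using False assms by (simp add: Bv_def)
qed

lemma Bv_le:
  assumes "b \<in> Phi k1 k2" "j \<le> k1"
  shows "Bv b j $ i \<le> k1 * k2"
  using assms unfolding Phi_def Bv_def by (cases "j = 0") auto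

lemma Rset_borel: "Rset k1 k2 b j \<in> sets (borel :: ((real^'m::finite) \<times> real) measure)"
proof -
  have "Rset k1 k2 b j = unit_cube \<inter> {x::(real^'m) \<times> real.
     (\<forall>i. fst (zpt k1 k2 b (j - 1)) $ i - 1 / real k1 / real k2 \<le> fst x $ i \<and>
          fst x $ i < fst (zpt k1 k2 b j) $ i) \<and>
     snd (zpt k1 k2 b (j - 1)) \<le> snd x \<and> snd x < snd (zpt k1 k2 b j)}"
    by (auto simp: Rset_def)
  also have "\<dots> \<in> sets borel" using unit_cube_borel by measurable
  finally show ?thesis .
qed

lemma pval_bound:
  fixes f :: "(real^'m::finite) \<times> real \<Rightarrow> real" and b :: "nat \<Rightarrow> nat^'m"
  assumes L: "L \<ge> 1" and pc: "piecewise_constant L f" and f0: "\<forall>x\<in>unit_cube. 0 \<le> f x"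
    and k: "k1 \<ge> 1" "k2 \<ge> 1" and b: "b \<in> Phi k1 k2" and j: "j \<in> {1..k1}"
    and v: "valid_index L \<alpha>" and RQ: "Rset k1 k2 b j \<subseteq> Qcube L \<alpha>"
  shows "0 \<le> pval f k1 k2 b j"
    "pval f k1 k2 b j \<le> cval L f \<alpha> * (1 / real k1 *
        (\<Prod>i\<in>UNIV. (real (Bv b j $ i) - real (Bv b (j - 1) $ i) + 1) * (1 / real k1 / real k2)))"
proof -
  define dy where "dy = 1 / real k1 / real k2"
  define c where "c = cval L f \<alpha>"
  have c0: "c \<ge> 0" unfolding c_def by (rule cval_nonneg[OF L v f0])
  define R where "R = Rset k1 k2 b j"
  define lo where "lo = ((\<chi> i. real (Bv b (j - 1) $ i) * dy - dy), real (j - 1) * (1 / real k1))"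
  define hi where "hi = ((\<chi> i. real (Bv b j $ i) * dy), real j * (1 / real k1))"
  have Rsub: "R \<subseteq> cbox lo hi"
  proof
    fix x assume xR: "x \<in> R"
    obtain u v where x: "x = (u, v)" by (cases x)
    show "x \<in> cbox lo hi"
      using xR unfolding x R_def Rset_def lo_def hi_def zpt_fst zpt_snd dy_def
      by (auto simp: cbox_Pair_iff mem_box_cart less_imp_le)
  qed
  have Rb: "R \<in> sets lebesgue"
    unfolding R_def by (rule sets_completionI_sets) (simp add: Rset_borel)
  have Rl: "R \<in> lmeasurable"
    by (rule bounded_set_imp_lmeasurable[OF bounded_subset[OF bounded_cbox Rsub] Rb])
  have pv: "pval f k1 k2 b j = integral R (\<lambda>_. c)"
    unfolding pval_def R_def[symmetric] c_def
    using f_on_Q[OF L pc v] RQ unfolding R_def by (intro integral_cong) auto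
  show "0 \<le> pval f k1 k2 b j"
    unfolding pv using c0 by (intro integral_nonneg integrable_on_const[OF Rl]) auto
  have "integral R (\<lambda>_. c) \<le> integral (cbox lo hi) (\<lambda>_. c)"
    using c0 by (intro integral_subset_le[OF Rsub] integrable_on_const[OF Rl] integrable_on_const) auto
  also have "\<dots> = measure lborel (cbox lo hi) * c" by simp
  also have "measure lborel (cbox lo hi) = 1 / real k1 * (\<Prod>i\<in>UNIV. (real (Bv b j $ i) - real (Bv b (j - 1) $ i) + 1) * dy)"
  proof -
    have mono: "real (Bv b (j - 1) $ i) \<le> real (Bv b j $ i)" for i using Bv_mono[OF b] j by auto
    have dy0: "dy > 0" using k by (simp add: dy_def)
    have le1: "real (Bv b (j - 1) $ i) * dy - dy \<le> real (Bv b j $ i) * dy" for i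
      using mult_right_mono[OF mono[of i] less_imp_le[OF dy0]] dy0 by linarith
    have "fst lo \<in> cbox (fst lo) (fst hi)"
      unfolding lo_def hi_def using le1 by (simp add: mem_box_cart)
    hence ne1: "cbox (fst lo) (fst hi) \<noteq> {}" by blast
    have "measure lborel (cbox lo hi) = measure lborel (cbox (fst lo) (fst hi)) * measure lborel (cbox (snd lo) (snd hi))"
      using content_Pair[of "fst lo" "snd lo" "fst hi" "snd hi"] by simp
    also have "measure lborel (cbox (fst lo) (fst hi)) = (\<Prod>i\<in>UNIV. fst hi $ i - fst lo $ i)"
      by (rule content_cbox_cart[OF ne1])
    also have "measure lborel (cbox (snd lo) (snd hi)) = 1 / real k1"
    proof -
      have "snd lo \<le> snd hi" unfolding lo_def hi_def by (simp add: divide_right_mono)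
      hence "measure lborel (cbox (snd lo) (snd hi)) = snd hi - snd lo" by simp
      also have "\<dots> = 1 / real k1" unfolding lo_def hi_def using j by (simp add: of_nat_diff field_simps)
      finally show ?thesis .
    qed
    finally show ?thesis unfolding lo_def hi_def by (simp add: algebra_simps)
  qed
  finally show "pval f k1 k2 b j \<le> cval L f \<alpha> * (1 / real k1 *
        (\<Prod>i\<in>UNIV. (real (Bv b j $ i) - real (Bv b (j - 1) $ i) + 1) * (1 / real k1 / real k2)))"
    unfolding pv c_def dy_def by (simp add: ac_simps)
qed

definition Nn :: "(nat \<Rightarrow> nat^'m::finite) \<Rightarrow> nat \<Rightarrow> 'm \<Rightarrow> real" where
  "Nn b j i = real (Bv b j $ i) - real (Bv b (j - 1) $ i)"

definition Wv :: "nat \<Rightarrow> nat \<Rightarrow> (nat \<Rightarrow> nat^'m::finite) \<Rightarrow> nat \<Rightarrow> (real^'m) \<times> real" where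
  "Wv k1 k2 b j = ((\<chi> i. Nn b j i * (1 / real k1 / real k2)), 0)"

lemma tel: "(\<Sum>j\<in>{1..<Suc p}. (X j - X (j - 1) :: real)) = X p - X 0"
  by (induction p) (auto simp: atLeastLessThanSuc)

lemma Nn_nonneg: "b \<in> Phi k1 k2 \<Longrightarrow> j \<in> {1..k1} \<Longrightarrow> Nn b j i \<ge> 0"
  using Bv_mono[of b k1 k2 j i] by (auto simp: Nn_def)

lemma sum_psi_split:
  assumes m1: "m \<ge> 1" and j0: "j0 \<in> {1..k}" and s: "0 < real k * t - real (j0 - 1)" "real k * t - real (j0 - 1) < 1"
  shows "(\<Sum>j\<in>{1..k}. psi m (real k * t - real (j - 1)) * F j)
       = (\<Sum>j\<in>{1..<j0}. F j) + psi m (real k * t - real (j0 - 1)) * F j0"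
proof -
  have e: "real k * t - real (j - 1) = (real k * t - real (j0 - 1)) + (real j0 - real j)" if "j \<ge> 1" for j
    using that j0 by (simp add: of_nat_diff)
  have "(\<Sum>j\<in>{1..k}. psi m (real k * t - real (j - 1)) * F j)
      = (\<Sum>j\<in>{1..k}. (if j < j0 then F j else 0) + (if j = j0 then psi m (real k * t - real (j0 - 1)) * F j0 else 0))"
  proof (intro sum.cong refl)
    fix j assume j: "j \<in> {1..k}"
    show "psi m (real k * t - real (j - 1)) * F j =
       (if j < j0 then F j else 0) + (if j = j0 then psi m (real k * t - real (j0 - 1)) * F j0 else 0)"
    proof (cases "j < j0")
      case True
      hence "real j0 - real j \<ge> 1" by linarith
      hence "psi m (real k * t - real (j - 1)) = 1" using e[of j] j s m1 by (intro psi_ge1) auto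
      thus ?thesis using True by simp
    next
      case False
      show ?thesis
      proof (cases "j = j0")
        case True thus ?thesis by simp
      next
        case False2: False
        hence "real j0 - real j \<le> -1" using False by linarith
        hence "psi m (real k * t - real (j - 1)) = 0" using e[of j] j s by (intro psi_le0) auto
        thus ?thesis using False False2 by simp
      qed
    qed
  qed
  also have "\<dots> = (\<Sum>j\<in>{1..k}. if j < j0 then F j else 0) + psi m (real k * t - real (j0 - 1)) * F j0"
    using j0 by (simp add: sum.distrib)
  also have "(\<Sum>j\<in>{1..k}. if j < j0 then F j else 0) = (\<Sum>j\<in>{1..<j0}. F j)"
  proof -
    have "(\<Sum>j\<in>{1..k}. if j < j0 then F j else 0) = (\<Sum>j\<in>{1..k} \<inter> {j. j < j0}. F j)"
      by (simp add: sum.inter_restrict)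
    also have "{1..k} \<inter> {j. j < j0} = {1..<j0}" using j0 by auto
    finally show ?thesis .
  qed
  finally show ?thesis .
qed

lemma gam_in_R:
  fixes b :: "nat \<Rightarrow> nat^'m::finite"
  assumes m1: "m \<ge> 1" and k: "k1 \<ge> 1" "k2 \<ge> 1" and b: "b \<in> Phi k1 k2" and j0: "j0 \<in> {1..k1}"
    and Npos: "\<forall>i. Nn b j0 i > 0"
    and s: "0 < real k1 * t - real (j0 - 1)" "real k1 * t - real (j0 - 1) < 1"
  shows "gam m k1 (Wv k1 k2 b) t \<in> Rset k1 k2 b j0"
proof -
  define dy where "dy = 1 / real k1 / real k2"
  define ps where "ps = psi m (real k1 * t - real (j0 - 1))"
  have ps: "0 < ps" "ps < 1" unfolding ps_def using psi_strict[OF m1 s] by auto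
  have dy0: "dy > 0" using k by (simp add: dy_def)
  have fstg: "fst (gam m k1 (Wv k1 k2 b) t) $ i = (real (Bv b (j0 - 1) $ i) + ps * Nn b j0 i) * dy" for i
  proof -
    have "fst (gam m k1 (Wv k1 k2 b) t) $ i = (\<Sum>j\<in>{1..k1}. psi m (real k1 * t - real (j - 1)) * (Nn b j i * dy))"
      unfolding fst_gam by (simp add: Wv_def dy_def)
    also have "\<dots> = (\<Sum>j\<in>{1..<j0}. Nn b j i * dy) + ps * (Nn b j0 i * dy)"
      unfolding ps_def by (rule sum_psi_split[OF m1 j0 s])
    also have "(\<Sum>j\<in>{1..<j0}. Nn b j i * dy) = real (Bv b (j0 - 1) $ i) * dy"
    proof -
      have "(\<Sum>j\<in>{1..<j0}. Nn b j i) = (\<Sum>j\<in>{1..<Suc (j0 - 1)}. Nn b j i)" using j0 by simp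
      also have "\<dots> = real (Bv b (j0 - 1) $ i) - real (Bv b 0 $ i)"
        unfolding Nn_def by (rule tel)
      also have "\<dots> = real (Bv b (j0 - 1) $ i)" by (simp add: Bv_def)
      finally show ?thesis by (simp add: sum_distrib_right[symmetric])
    qed
    finally show ?thesis by (simp add: algebra_simps)
  qed
  have sndg: "snd (gam m k1 (Wv k1 k2 b) t) = t" unfolding snd_gam by (simp add: Wv_def)
  have lo: "real (Bv b (j0 - 1) $ i) * dy < fst (gam m k1 (Wv k1 k2 b) t) $ i" for i
    unfolding fstg using ps Npos dy0 by (simp add: distrib_right)
  have hi: "fst (gam m k1 (Wv k1 k2 b) t) $ i < real (Bv b j0 $ i) * dy" for i
  proof -
    have "ps * Nn b j0 i < Nn b j0 i" using ps Npos[rule_format, of i] by simp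
    hence "real (Bv b (j0 - 1) $ i) + ps * Nn b j0 i < real (Bv b j0 $ i)" by (simp add: Nn_def)
    thus ?thesis unfolding fstg using dy0 by (simp add: mult_strict_right_mono)
  qed
  have hi1: "real (Bv b j0 $ i) * dy \<le> 1" for i
  proof -
    have "real (Bv b j0 $ i) \<le> real k1 * real k2" using Bv_le[OF b, of j0 i] j0 by (simp flip: of_nat_mult)
    hence "real (Bv b j0 $ i) * dy \<le> real k1 * real k2 * dy" using dy0 by (simp add: mult_right_mono)
    also have "\<dots> = 1" using k by (simp add: dy_def)
    finally show ?thesis .
  qed
  have t0: "0 < t" using s(1) k by (smt (verit) of_nat_0_le_iff zero_less_mult_iff of_nat_less_0_iff)
  have tj: "real (j0 - 1) / real k1 \<le> t" "t < real j0 / real k1"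
  proof -
    have kp: "real k1 > 0" using k by simp
    have "real (j0 - 1) < real k1 * t" using s(1) by simp
    thus "real (j0 - 1) / real k1 \<le> t" using kp by (simp add: divide_le_eq mult.commute less_imp_le)
    have "real k1 * t < real (j0 - 1) + 1" using s(2) by simp
    also have "\<dots> = real j0" using j0 by (simp add: of_nat_diff)
    finally show "t < real j0 / real k1" using kp by (simp add: less_divide_eq mult.commute)
  qed
  have t1: "t < 1"
  proof -
    have "real j0 / real k1 \<le> 1" using j0 k by simp
    thus ?thesis using tj by linarith
  qed
  have Bv0: "0 \<le> real (Bv b (j0 - 1) $ i) * dy" for i using dy0 by simp
  define x where "x = gam m k1 (Wv k1 k2 b) t"
  have sx: "snd x = t" using sndg by (simp add: x_def)
  have u: "x \<in> unit_cube"
  proof -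
    have "0 \<le> fst x $ i \<and> fst x $ i < 1" for i
      using Bv0[of i] lo[of i] hi[of i] hi1[of i] unfolding x_def by linarith
    thus ?thesis unfolding unit_cube_def using sx t0 t1 by auto
  qed
  have r1: "fst (zpt k1 k2 b (j0 - 1)) $ i - 1 / real k1 / real k2 \<le> fst x $ i" for i
    using lo[of i] dy0 unfolding zpt_fst x_def dy_def[symmetric] by linarith
  have r2: "fst x $ i < fst (zpt k1 k2 b j0) $ i" for i
    using hi[of i] unfolding zpt_fst x_def dy_def[symmetric] by linarith
  have r3: "snd (zpt k1 k2 b (j0 - 1)) \<le> snd x" "snd x < snd (zpt k1 k2 b j0)"
    unfolding zpt_snd sx using tj by simp_all
  show ?thesis unfolding x_def[symmetric] Rset_def using u r1 r2 r3 by blast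
qed

lemma mul_powr: "(s::real) > 0 \<Longrightarrow> s * s powr (e - 1) = s powr e"
proof -
  assume sp: "s > 0"
  have "s powr 1 = s" using sp by simp
  hence "s * s powr (e - 1) = s powr 1 * s powr (e - 1)" by (simp only:)
  also have "\<dots> = s powr (1 + (e - 1))" by (rule powr_add[symmetric])
  also have "1 + (e - 1) = e" by simp
  finally show ?thesis .
qed

lemma powr_frac_ge:
  fixes x s e :: real
  assumes "0 \<le> x" "x \<le> s" "0 < e" "e \<le> 1"
  shows "x * s powr (e - 1) \<le> x powr e"
proof (cases "x = 0")
  case True thus ?thesis by simp
next
  case False
  hence xp: "x > 0" using assms by simp
  have "s powr (e - 1) \<le> x powr (e - 1)"
    using xp assms by (intro powr_mono2') auto
  hence "x * s powr (e - 1) \<le> x * x powr (e - 1)" using xp by simp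
  also have "\<dots> = x powr e" using xp by (rule mul_powr)
  finally show ?thesis .
qed

lemma root_subadd:
  fixes x y e :: real
  assumes "0 \<le> x" "0 \<le> y" "0 < e" "e \<le> 1"
  shows "(x + y) powr e \<le> x powr e + y powr e"
proof (cases "x + y = 0")
  case True thus ?thesis using assms by simp
next
  case False
  define s where "s = x + y"
  have sp: "s > 0" using False assms unfolding s_def by simp
  have "s powr e = s * s powr (e - 1)" using sp by (simp add: mul_powr)
  also have "\<dots> = x * s powr (e - 1) + y * s powr (e - 1)" unfolding s_def by (simp add: distrib_right)
  also have "\<dots> \<le> x powr e + y powr e"
    using assms by (intro add_mono powr_frac_ge) (auto simp: s_def)
  finally show ?thesis unfolding s_def .
qed

lemma prod_diff_bound:
  fixes x :: "'a \<Rightarrow> real"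
  assumes "finite A" "\<And>i. i \<in> A \<Longrightarrow> 0 \<le> x i" "\<And>i. i \<in> A \<Longrightarrow> x i \<le> K"
  shows "(K + 1) * ((\<Prod>i\<in>A. x i + 1) - (\<Prod>i\<in>A. x i)) \<le> real (card A) * (K + 1) ^ card A"
  using assms
proof (induction A rule: finite_induct)
  case empty thus ?case by simp
next
  case (insert a F)
  have K0: "K \<ge> 0" using insert.prems(1,2)[of a] by auto
  have IH: "(K + 1) * ((\<Prod>i\<in>F. x i + 1) - (\<Prod>i\<in>F. x i)) \<le> real (card F) * (K + 1) ^ card F"
    using insert by auto
  define P1 where "P1 = (\<Prod>i\<in>F. x i + 1)"
  define P0 where "P0 = (\<Prod>i\<in>F. x i)"
  have P00: "P0 \<ge> 0" unfolding P0_def using insert.prems by (intro prod_nonneg) auto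
  have D0: "P1 - P0 \<ge> 0" unfolding P1_def P0_def using insert.prems by (simp add: prod_mono)
  have P0K: "P0 \<le> (K + 1) ^ card F"
  proof -
    have le: "\<And>i. i \<in> F \<Longrightarrow> 0 \<le> x i \<and> x i \<le> K + 1" using insert.prems by fastforce
    have "P0 \<le> (\<Prod>i\<in>F. K + 1)" unfolding P0_def using le by (intro prod_mono) auto
    thus ?thesis by simp
  qed
  have xa: "0 \<le> x a" "x a \<le> K" using insert.prems by auto
  have eq: "(\<Prod>i\<in>insert a F. x i + 1) - (\<Prod>i\<in>insert a F. x i) = (x a + 1) * (P1 - P0) + P0"
    using insert.hyps by (simp add: P1_def P0_def algebra_simps)
  have "(K + 1) * ((x a + 1) * (P1 - P0) + P0) = (x a + 1) * ((K + 1) * (P1 - P0)) + (K + 1) * P0"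
    by (simp add: algebra_simps)
  also have "\<dots> \<le> (K + 1) * (real (card F) * (K + 1) ^ card F) + (K + 1) * (K + 1) ^ card F"
  proof (rule add_mono[OF mult_mono mult_left_mono])
    show "(K + 1) * (P1 - P0) \<le> real (card F) * (K + 1) ^ card F" using IH unfolding P1_def P0_def .
  qed (use xa K0 D0 P0K in auto)
  also have "\<dots> = real (card (insert a F)) * (K + 1) ^ card (insert a F)"
    using insert.hyps by (simp add: algebra_simps)
  finally show ?case unfolding eq .
qed

lemma scale_lemma:
  fixes c P k :: real and n :: nat
  assumes c: "c \<ge> 0" and P: "P \<ge> 0" and k: "k \<ge> 1"
  shows "c powr (1 / real (n + 1)) * (k ^ n * P) powr (1 / real (n + 1)) / k
       = (c * (1 / k) * P) powr (1 / real (n + 1))"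
proof -
  define e where "e = 1 / real (n + 1)"
  have kp: "k > 0" using k by simp
  have "(k ^ n * P) powr e = (k ^ n) powr e * P powr e" using kp P by (simp add: powr_mult)
  also have "(k ^ n) powr e = k powr (real n * e)" using kp by (simp add: powr_realpow[symmetric] powr_powr)
  finally have A: "(k ^ n * P) powr e = k powr (real n * e) * P powr e" .
  have B: "(c * (1 / k) * P) powr e = c powr e * (1 / k) powr e * P powr e"
    using c kp P by (simp only: powr_mult mult_nonneg_nonneg less_imp_le divide_nonneg_nonneg zero_le_one)
  have C: "k powr (real n * e) / k = (1 / k) powr e"
  proof -
    have "real n * e = 1 - e" unfolding e_def by (simp add: field_simps)
    hence "k powr (real n * e) = k powr 1 / k powr e" by (simp add: powr_diff)
    also have "k powr 1 = k" using kp by simp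
    finally have "k powr (real n * e) / k = 1 / k powr e" using kp by simp
    also have "\<dots> = (1 / k) powr e" using kp by (simp add: powr_divide)
    finally show ?thesis .
  qed
  have "c powr e * (k ^ n * P) powr e / k = c powr e * (k powr (real n * e) / k) * P powr e"
    unfolding A by simp
  also have "\<dots> = (c * (1 / k) * P) powr e" unfolding C B by simp
  finally show ?thesis unfolding e_def .
qed

lemma err_ineq:
  fixes Lam eps k1 k2 :: real and n :: nat
  assumes L0: "Lam \<ge> 0" and ep: "eps > 0" and k1: "k1 \<ge> 1" and k2: "k2 \<ge> 1"
    and hyp: "4 ^ (n + 1) * real (n + 1) * Lam * k1 ^ n / eps ^ (n + 1) \<le> k2"
  shows "Lam * (1 / k1) * ((1 / (k1 * k2)) ^ n * (real n * (k1 * k2 + 1) ^ n / (k1 * k2 + 1)))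
      \<le> (eps / (2 * k1)) ^ (n + 1)"
proof -
  define K where "K = k1 * k2"
  have K1: "K \<ge> 1" unfolding K_def using k1 k2 by (metis mult_mono' mult_1_right order_trans zero_le_one)
  have Kp: "K > 0" using K1 by simp
  have k1p: "k1 > 0" using k1 by simp
  have a1: "(1 / K) ^ n * (K + 1) ^ n \<le> 2 ^ n"
  proof -
    have "(1 / K) ^ n * (K + 1) ^ n = ((K + 1) / K) ^ n" by (simp add: power_mult_distrib[symmetric])
    also have "\<dots> \<le> 2 ^ n"
    proof (rule power_mono)
      show "(K + 1) / K \<le> 2" using K1 Kp by (simp add: divide_le_eq)
    qed (use Kp in simp)
    finally show ?thesis .
  qed
  have stepa: "Lam * (1 / k1) * ((1 / K) ^ n * (real n * (K + 1) ^ n / (K + 1))) \<le> Lam * real n * 2 ^ n / (k1 * K)"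
  proof -
    have "Lam * (1 / k1) * ((1 / K) ^ n * (real n * (K + 1) ^ n / (K + 1)))
        = (Lam * real n / k1) * (((1 / K) ^ n * (K + 1) ^ n) / (K + 1))" by (simp add: algebra_simps)
    also have "\<dots> \<le> (Lam * real n / k1) * (2 ^ n / K)"
    proof (rule mult_left_mono)
      have "((1 / K) ^ n * (K + 1) ^ n) / (K + 1) \<le> 2 ^ n / (K + 1)"
        using a1 Kp by (simp add: divide_right_mono)
      also have "\<dots> \<le> 2 ^ n / K" using Kp by (simp add: frac_le)
      finally show "((1 / K) ^ n * (K + 1) ^ n) / (K + 1) \<le> 2 ^ n / K" .
    qed (use L0 k1p in simp)
    also have "\<dots> = Lam * real n * 2 ^ n / (k1 * K)" by simp
    finally show ?thesis .
  qed
  have hyp': "4 ^ (n + 1) * real (n + 1) * Lam * k1 ^ n \<le> k2 * eps ^ (n + 1)"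
    using hyp ep by (simp add: divide_le_eq)
  have c1: "real n * 2 ^ (2 * n + 1) \<le> 4 ^ (n + 1) * real (n + 1)"
  proof -
    have "(4::real) ^ (n + 1) = 2 * 2 ^ (2 * n + 1)" by (simp add: power_mult power_add)
    hence "4 ^ (n + 1) * real (n + 1) = 2 ^ (2 * n + 1) * (2 * real (n + 1))" by simp
    moreover have "real n \<le> 2 * real (n + 1)" by simp
    ultimately show ?thesis by (simp add: mult.commute)
  qed
  have stepb: "Lam * real n * 2 ^ n * (2 * k1) ^ (n + 1) \<le> eps ^ (n + 1) * (k1 * K)"
  proof -
    have eq1: "(2 * k1) ^ (n + 1) = 2 ^ (n + 1) * (k1 ^ n * k1)" by (simp add: power_mult_distrib)
    have eq2: "(2::real) ^ (2 * n + 1) = 2 ^ n * 2 ^ (n + 1)"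
    proof -
      have "2 * n + 1 = n + (n + 1)" by simp
      thus ?thesis by (metis power_add)
    qed
    have "Lam * real n * 2 ^ n * (2 * k1) ^ (n + 1) = Lam * real n * (2 ^ n * 2 ^ (n + 1)) * (k1 ^ n * k1)"
      unfolding eq1 by (simp only: ac_simps)
    also have "\<dots> = (real n * 2 ^ (2 * n + 1)) * (Lam * k1 ^ n) * k1"
      unfolding eq2 by (simp only: ac_simps)
    also have "\<dots> \<le> (4 ^ (n + 1) * real (n + 1)) * (Lam * k1 ^ n) * k1"
      using c1 L0 k1p by (intro mult_right_mono) auto
    also have "\<dots> \<le> (k2 * eps ^ (n + 1)) * k1"
      using hyp' k1p by (intro mult_right_mono) (auto simp: algebra_simps)
    also have "\<dots> \<le> (k2 * eps ^ (n + 1)) * k1 * k1"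
    proof -
      have "0 \<le> k2 * eps ^ (n + 1) * k1" using k1 k2 ep by simp
      from mult_left_mono[OF k1 this] show ?thesis by simp
    qed
    also have "\<dots> = eps ^ (n + 1) * (k1 * K)" by (simp add: K_def algebra_simps)
    finally show ?thesis .
  qed
  have "Lam * real n * 2 ^ n / (k1 * K) \<le> (eps / (2 * k1)) ^ (n + 1)"
  proof -
    have pos: "(2 * k1) ^ (n + 1) > 0" "k1 * K > 0" using k1p Kp by auto
    have "Lam * real n * 2 ^ n \<le> eps ^ (n + 1) * (k1 * K) / (2 * k1) ^ (n + 1)"
      by (subst pos_le_divide_eq[OF pos(1)]) (rule stepb)
    hence "Lam * real n * 2 ^ n \<le> eps ^ (n + 1) / (2 * k1) ^ (n + 1) * (k1 * K)" by simp
    hence "Lam * real n * 2 ^ n / (k1 * K) \<le> eps ^ (n + 1) / (2 * k1) ^ (n + 1)"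
      by (subst pos_divide_le_eq[OF pos(2)])
    thus ?thesis by (simp add: power_divide)
  qed
  with stepa show ?thesis unfolding K_def by simp
qed

lemma gam_cong:
  assumes "\<And>j. j \<in> {1..k} \<Longrightarrow> W j = W' j"
  shows "gam m k W = gam m k W'"
proof (rule ext)
  fix t
  have "(\<Sum>j\<in>{1..k}. psi m (real k * t - real (j - 1)) *\<^sub>R W j) = (\<Sum>j\<in>{1..k}. psi m (real k * t - real (j - 1)) *\<^sub>R W' j)"
    using assms by (intro sum.cong refl) simp
  thus "gam m k W t = gam m k W' t" by (simp add: gam_def)
qed

lemma prod_scale: "(\<Prod>i\<in>(UNIV::'m::finite set). a i * (s::real)) = s ^ CARD('m) * (\<Prod>i\<in>UNIV. a i)"
  by (simp add: prod.distrib mult.commute)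

lemma main_bound:
  fixes f :: "(real^'m::finite) \<times> real \<Rightarrow> real" and b :: "nat \<Rightarrow> nat^'m"
  assumes L1: "L \<ge> 1" and f0: "\<forall>x\<in>unit_cube. 0 \<le> f x" and fz: "\<forall>x. x \<notin> unit_cube \<longrightarrow> f x = 0"
    and pc: "piecewise_constant L f"
    and ep: "\<epsilon> > 0" and k1: "k1 \<ge> 1" and k2: "k2 \<ge> 1"
    and hk: "real k2 \<ge> (4 ^ dim_of TYPE('m) * real (dim_of TYPE('m))) * real_of_ereal (Linf_norm f) * real k1 ^ (dim_of TYPE('m) - 1) / \<epsilon> ^ dim_of TYPE('m)"
    and b: "b \<in> Phi k1 k2"
  shows "(\<Sum>j\<in>Hset L k1 k2 b. pval f k1 k2 b j powr (1 / real (dim_of TYPE('m)))) \<le> Jbar f + \<epsilon>"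
proof -
  define n where "n = CARD('m)"
  define D where "D = dim_of TYPE('m)"
  have Dn: "D = n + 1" by (simp add: D_def n_def dim_of_def)
  define e where "e = 1 / real D"
  have e01: "0 < e" "e \<le> 1" by (auto simp: e_def Dn)
  define Lam where "Lam = real_of_ereal (Linf_norm f)"
  define Mf where "Mf = fM L f"
  have fb: "f \<in> borel_measurable borel" by (rule f_borel[OF L1 pc fz])
  have f0a: "\<forall>x. 0 \<le> f x" and fMa: "\<forall>x. f x \<le> Mf" and Mf0: "Mf \<ge> 0"
    using f_bound[OF L1 pc fz f0] unfolding Mf_def by auto
  define H where "H = Hset L k1 k2 b"
  have H1: "H \<subseteq> {1..k1}" by (auto simp: H_def Hset_def)
  have finH: "finite H" using H1 finite_subset by blast
  have cardH: "card H \<le> k1" using card_mono[OF _ H1] by simp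
  define \<alpha> where "\<alpha> j = (SOME a. valid_index L a \<and> Rset k1 k2 b j \<subseteq> Qcube L a)" for j
  have \<alpha>p: "valid_index L (\<alpha> j) \<and> Rset k1 k2 b j \<subseteq> Qcube L (\<alpha> j)" if "j \<in> H" for j
  proof -
    have "\<exists>a. valid_index L a \<and> Rset k1 k2 b j \<subseteq> Qcube L a" using that by (auto simp: H_def Hset_def)
    thus ?thesis unfolding \<alpha>_def by (rule someI_ex)
  qed
  define cc where "cc j = (if j \<in> H then cval L f (\<alpha> j) else 0)" for j
  have cc0: "cc j \<ge> 0" for j using cval_nonneg[OF L1 _ f0] \<alpha>p by (auto simp: cc_def)
  have ccL: "cc j \<le> Lam" if "j \<in> H" for j
    using cval_le_Linf[OF L1 pc fz f0] \<alpha>p[OF that] that by (simp add: cc_def Lam_def)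
  have Lam0: "Lam \<ge> 0"
  proof -
    have v: "valid_index L ((\<chi> i. 1) :: nat^'m, 1)" using L1 by (simp add: valid_index_def)
    show ?thesis using cval_le_Linf[OF L1 pc fz f0 v] cval_nonneg[OF L1 v f0] unfolding Lam_def by linarith
  qed
  define dy where "dy = 1 / real k1 / real k2"
  define K where "K = real k1 * real k2"
  have K1: "K \<ge> 1"
  proof -
    have "real k1 * real k2 \<ge> 1 * 1" using k1 k2 by (intro mult_mono) auto
    thus ?thesis by (simp add: K_def)
  qed
  have dyK: "dy = 1 / K" by (simp add: dy_def K_def)
  define N where "N j i = Nn b j i" for j i
  have N0: "N j i \<ge> 0" if "j \<in> {1..k1}" for j i using Nn_nonneg[OF b that] by (simp add: N_def)
  have NK: "N j i \<le> K" if "j \<in> {1..k1}" for j i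
  proof -
    have "real (Bv b j $ i) \<le> K" using Bv_le[OF b, of j i] that by (simp add: K_def flip: of_nat_mult)
    thus ?thesis by (simp add: N_def Nn_def)
  qed
  define G where "G = {j \<in> H. \<forall>i. N j i > 0}"
  have GH: "G \<subseteq> H" by (auto simp: G_def)
  define X where "X j = (cc j * (1 / real k1) * (\<Prod>i\<in>UNIV. N j i * dy)) powr e" for j
  define Y where "Y j = (cc j * (1 / real k1) * (dy ^ n * ((\<Prod>i\<in>UNIV. N j i + 1) - (\<Prod>i\<in>UNIV. N j i)))) powr e" for j
  have dy0: "dy > 0" using k1 k2 by (simp add: dy_def)
  have step2: "pval f k1 k2 b j powr e \<le> X j + Y j" if jH: "j \<in> H" for j
  proof -
    have j: "j \<in> {1..k1}" using jH H1 by auto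
    note pb = pval_bound[OF L1 pc f0 k1 k2 b j conjunct1[OF \<alpha>p[OF jH]] conjunct2[OF \<alpha>p[OF jH]]]
    have Nj0: "\<forall>i. N j i \<ge> 0" using N0[OF j] by auto
    have pr1: "(\<Prod>i\<in>UNIV. (real (Bv b j $ i) - real (Bv b (j - 1) $ i) + 1) * (1 / real k1 / real k2))
        = dy ^ n * (\<Prod>i\<in>UNIV. N j i + 1)"
      unfolding dy_def[symmetric] n_def by (simp add: prod_scale N_def Nn_def)
    have pr2: "(\<Prod>i\<in>UNIV. N j i * dy) = dy ^ n * (\<Prod>i\<in>UNIV. N j i)"
      unfolding n_def by (rule prod_scale)
    define u where "u = cc j * (1 / real k1) * (\<Prod>i\<in>UNIV. N j i * dy)"
    define v where "v = cc j * (1 / real k1) * (dy ^ n * ((\<Prod>i\<in>UNIV. N j i + 1) - (\<Prod>i\<in>UNIV. N j i)))"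
    have u0: "u \<ge> 0" unfolding u_def using cc0 Nj0 dy0 by (intro mult_nonneg_nonneg prod_nonneg) auto
    have diff0: "(\<Prod>i\<in>UNIV. N j i + 1) - (\<Prod>i\<in>UNIV. N j i) \<ge> 0"
      using Nj0 by (simp add: prod_mono)
    have v0: "v \<ge> 0" unfolding v_def using cc0 diff0 dy0 by (intro mult_nonneg_nonneg) auto
    have "pval f k1 k2 b j \<le> cc j * (1 / real k1 * (dy ^ n * (\<Prod>i\<in>UNIV. N j i + 1)))"
      using pb(2) jH unfolding pr1 by (simp add: cc_def)
    also have "\<dots> = u + v" unfolding u_def v_def pr2 by (simp add: algebra_simps)
    finally have pu: "pval f k1 k2 b j \<le> u + v" .
    have "pval f k1 k2 b j powr e \<le> (u + v) powr e" using pb(1) pu by (intro powr_mono2) (use e01 in auto)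
    also have "\<dots> \<le> u powr e + v powr e" using u0 v0 e01 by (rule root_subadd)
    finally show ?thesis unfolding X_def Y_def u_def v_def .
  qed
  have X0: "X j = 0" if jHG: "j \<in> H - G" for j
  proof -
    obtain i where "\<not> N j i > 0" using jHG by (auto simp: G_def)
    moreover have "N j i \<ge> 0" using jHG H1 N0 by auto
    ultimately have "N j i = 0" by simp
    hence "(\<Prod>i\<in>UNIV. N j i * dy) = 0" by (intro prod_zero) auto
    thus ?thesis by (simp add: X_def)
  qed
  have sumHG: "(\<Sum>j\<in>H. X j) = (\<Sum>j\<in>G. X j)"
    by (rule sum.mono_neutral_right[OF finH GH]) (use X0 in auto)
  have hyp': "4 ^ (n + 1) * real (n + 1) * Lam * real k1 ^ n / \<epsilon> ^ (n + 1) \<le> real k2"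
    using hk unfolding Lam_def D_def[symmetric] Dn by simp
  have Ybound: "Y j \<le> \<epsilon> / (2 * real k1)" if jH: "j \<in> H" for j
  proof -
    have j: "j \<in> {1..k1}" using jH H1 by auto
    define df where "df = (\<Prod>i\<in>UNIV. N j i + 1) - (\<Prod>i\<in>UNIV. N j i)"
    have df0: "df \<ge> 0" unfolding df_def using N0[OF j] by (simp add: prod_mono)
    have "(K + 1) * df \<le> real (card (UNIV::'m set)) * (K + 1) ^ card (UNIV::'m set)"
      unfolding df_def by (rule prod_diff_bound) (use N0[OF j] NK[OF j] in auto)
    hence dfb: "df \<le> real n * (K + 1) ^ n / (K + 1)" using K1 by (simp add: n_def le_divide_eq mult.commute)
    have "cc j * (1 / real k1) * (dy ^ n * df) \<le> Lam * (1 / real k1) * (dy ^ n * (real n * (K + 1) ^ n / (K + 1)))"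
      using ccL[OF jH] cc0 dy0 df0 dfb Lam0 by (intro mult_mono) auto
    also have "\<dots> \<le> (\<epsilon> / (2 * real k1)) ^ (n + 1)"
      unfolding dyK K_def using err_ineq[OF Lam0 ep _ _ hyp'] k1 k2 by simp
    finally have inner: "cc j * (1 / real k1) * (dy ^ n * df) \<le> (\<epsilon> / (2 * real k1)) ^ (n + 1)" .
    have "Y j \<le> ((\<epsilon> / (2 * real k1)) ^ (n + 1)) powr e"
      unfolding Y_def df_def[symmetric] using inner cc0 dy0 df0 e01
      by (intro powr_mono2) auto
    also have "\<dots> = \<epsilon> / (2 * real k1)" unfolding e_def Dn using ep k1
      by (intro pow_powr_inv) auto
    finally show ?thesis .
  qed
  have sumY: "(\<Sum>j\<in>H. Y j) \<le> \<epsilon> / 2"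
  proof -
    have "(\<Sum>j\<in>H. Y j) \<le> real (card H) * (\<epsilon> / (2 * real k1))"
      using Ybound by (rule sum_bounded_above)
    also have "\<dots> \<le> real k1 * (\<epsilon> / (2 * real k1))"
      using cardH ep by (intro mult_right_mono) auto
    also have "\<dots> = \<epsilon> / 2" using k1 by simp
    finally show ?thesis .
  qed
  define B0 where "B0 = Mf powr e * real D"
  have B00: "B0 \<ge> 0" by (simp add: B0_def)
  define m where "m = nat \<lceil>B0 / \<epsilon>\<rceil> + 1"
  have m1: "m \<ge> 1" by (simp add: m_def)
  have mB: "B0 \<le> real m * \<epsilon>"
  proof -
    have "B0 / \<epsilon> \<le> real m" unfolding m_def by linarith
    thus ?thesis using ep by (simp add: divide_le_eq)
  qed
  define W' where "W' j = (if j \<in> {1..k1} then Wv k1 k2 b j else 0)" for j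
  have gW: "gam m k1 W' = gam m k1 (Wv k1 k2 b)" by (rule gam_cong) (simp add: W'_def)
  have Wn': "\<forall>j i. 0 \<le> fst (W' j) $ i" using N0 dy0 by (simp add: W'_def Wv_def N_def dy_def)
  have Ws': "\<forall>j. snd (W' j) = 0" by (simp add: W'_def Wv_def)
  have G1: "G \<subseteq> {1..k1}" using GH H1 by auto
  have fc: "\<forall>j\<in>G. \<forall>t. 0 < real k1 * t - real (j - 1) \<and> real k1 * t - real (j - 1) < 1 \<longrightarrow> f (gam m k1 W' t) = cc j"
  proof (intro ballI allI impI)
    fix j t assume jG: "j \<in> G" and s: "0 < real k1 * t - real (j - 1) \<and> real k1 * t - real (j - 1) < 1"
    have jH: "j \<in> H" using jG GH by auto
    have Np: "\<forall>i. Nn b j i > 0" using jG by (simp add: G_def N_def)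
    have "gam m k1 W' t \<in> Rset k1 k2 b j"
      unfolding gW using gam_in_R[OF m1 k1 k2 b _ Np] jG G1 s by auto
    hence "gam m k1 W' t \<in> Qcube L (\<alpha> j)" using \<alpha>p[OF jH] by auto
    thus "f (gam m k1 W' t) = cc j" using f_on_Q[OF L1 pc] \<alpha>p[OF jH] jH by (simp add: cc_def)
  qed
  have JL: "(\<Sum>j\<in>G. cc j powr e * (\<Prod>i\<in>UNIV. real k1 * fst (W' j) $ i) powr e / pa m powr e) / real k1
      \<le> Jfun f (gam m k1 W')"
    unfolding e_def D_def using J_lower[OF m1 k1 fb f0a fMa Wn' Ws' G1 fc] cc0 by simp
  have adm: "admissible (gam m k1 W')" by (rule admissible_gam[OF m1]) (use Wn' Ws' in auto)
  have JJ: "Jfun f (gam m k1 W') \<le> Jbar f" by (rule Jbar_ge[OF f0a fMa fz adm])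
  have pa1: "pa m \<ge> 1" using pa_ge1[OF m1] .
  have pae: "pa m powr e > 0" using pa1 by simp
  have termeq: "cc j powr e * (\<Prod>i\<in>UNIV. real k1 * fst (W' j) $ i) powr e / pa m powr e / real k1
      = X j / pa m powr e" if "j \<in> G" for j
  proof -
    have j: "j \<in> {1..k1}" using that G1 by auto
    have fw: "fst (W' j) $ i = N j i * dy" for i using j by (simp add: W'_def Wv_def N_def dy_def)
    have "(\<Prod>i\<in>UNIV. real k1 * fst (W' j) $ i) = (\<Prod>i\<in>UNIV. (N j i * dy) * real k1)"
      unfolding fw by (simp add: mult.commute)
    also have "\<dots> = real k1 ^ n * (\<Prod>i\<in>UNIV. N j i * dy)" unfolding n_def by (rule prod_scale)
    finally have "(\<Prod>i\<in>UNIV. real k1 * fst (W' j) $ i) = real k1 ^ n * (\<Prod>i\<in>UNIV. N j i * dy)" .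
    moreover have "cc j powr e * (real k1 ^ n * (\<Prod>i\<in>UNIV. N j i * dy)) powr e / real k1 = X j"
      unfolding X_def e_def Dn
      by (rule scale_lemma) (use cc0 N0[OF j] dy0 k1 in \<open>auto intro: prod_nonneg\<close>)
    ultimately have a: "cc j powr e * (\<Prod>i\<in>UNIV. real k1 * fst (W' j) $ i) powr e / real k1 = X j" by simp
    have "cc j powr e * (\<Prod>i\<in>UNIV. real k1 * fst (W' j) $ i) powr e / pa m powr e / real k1
       = cc j powr e * (\<Prod>i\<in>UNIV. real k1 * fst (W' j) $ i) powr e / real k1 / pa m powr e"
      by (simp add: divide_divide_eq_left mult.commute)
    thus ?thesis unfolding a .
  qed
  have "(\<Sum>j\<in>G. X j) / pa m powr e = (\<Sum>j\<in>G. cc j powr e * (\<Prod>i\<in>UNIV. real k1 * fst (W' j) $ i) powr e / pa m powr e) / real k1"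
    using termeq by (simp add: sum_divide_distrib)
  also have "\<dots> \<le> Jbar f" using JL JJ by linarith
  finally have SX: "(\<Sum>j\<in>G. X j) \<le> pa m powr e * Jbar f" using pae by (simp add: divide_le_eq mult.commute)
  have X0': "X j \<ge> 0" for j by (simp add: X_def)
  have Jb0: "Jbar f \<ge> 0"
  proof -
    have "0 \<le> (\<Sum>j\<in>G. X j)" using X0' by (simp add: sum_nonneg)
    hence "0 \<le> pa m powr e * Jbar f" using SX by linarith
    thus ?thesis using pae by (simp add: zero_le_mult_iff)
  qed
  have JbB: "Jbar f \<le> B0"
    unfolding Jbar_def
  proof (rule cSup_least)
    show "Jfun f ` {\<gamma>. admissible \<gamma>} \<noteq> {}" using adm by auto
    show "x \<le> B0" if "x \<in> Jfun f ` {\<gamma>. admissible \<gamma>}" for x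
      using that J_upper[OF f0a fMa fz] by (auto simp: B0_def e_def D_def)
  qed
  have "pa m powr e * Jbar f \<le> pa m * Jbar f"
  proof (rule mult_right_mono[OF _ Jb0])
    have "pa m powr e \<le> pa m powr 1" using pa1 e01 by (intro powr_mono) auto
    thus "pa m powr e \<le> pa m" using pa1 by simp
  qed
  also have "pa m * Jbar f = Jbar f + (pa m - 1) * Jbar f" by (simp add: algebra_simps)
  also have "(pa m - 1) * Jbar f \<le> (pa m - 1) * B0" using JbB pa1 by (intro mult_left_mono) auto
  also have "(pa m - 1) * B0 \<le> \<epsilon> / 2"
  proof -
    have "pa m - 1 = 1 / (2 * real m)" using m1 by (simp add: pa_def field_simps)
    hence "(pa m - 1) * B0 = B0 / (2 * real m)" by simp
    also have "\<dots> \<le> \<epsilon> / 2" using mB m1 by (simp add: divide_le_eq field_simps)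
    finally show ?thesis .
  qed
  finally have SX2: "(\<Sum>j\<in>G. X j) \<le> Jbar f + \<epsilon> / 2" using SX by linarith
  have "(\<Sum>j\<in>H. pval f k1 k2 b j powr e) \<le> (\<Sum>j\<in>H. X j + Y j)"
    using step2 by (rule sum_mono)
  also have "\<dots> = (\<Sum>j\<in>G. X j) + (\<Sum>j\<in>H. Y j)" by (simp add: sum.distrib sumHG)
  also have "\<dots> \<le> Jbar f + \<epsilon>" using SX2 sumY by linarith
  finally show ?thesis unfolding H_def e_def D_def .
qed

theorem lemma3p3:
  "\<exists>C>0. \<forall>(L::nat) (f :: (real^'m::finite) \<times> real \<Rightarrow> real).
     L \<ge> 1 \<and> (\<forall>x\<in>unit_cube. 0 \<le> f x) \<and> (\<forall>x. x \<notin> unit_cube \<longrightarrow> f x = 0) \<and>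
     piecewise_constant L f \<longrightarrow>
     (\<forall>\<epsilon>>0. \<forall>k1 k2::nat. k1 \<ge> 1 \<and> k2 \<ge> 1 \<and> k1 \<ge> L \<and>
        real k2 \<ge> C * real_of_ereal (Linf_norm f) * real k1 ^ (dim_of TYPE('m) - 1) / \<epsilon> ^ dim_of TYPE('m) \<longrightarrow>
        (\<forall>b\<in>Phi k1 k2. (\<Sum>j\<in>Hset L k1 k2 b. pval f k1 k2 b j powr (1 / real (dim_of TYPE('m))))
            \<le> Jbar f + \<epsilon>))"
proof (rule exI[of _ "4 ^ dim_of TYPE('m) * real (dim_of TYPE('m))"], intro conjI allI impI ballI)
  show "0 < (4::real) ^ dim_of TYPE('m) * real (dim_of TYPE('m))" by (simp add: dim_of_def)
next
  fix L :: nat and f :: "(real^'m::finite) \<times> real \<Rightarrow> real" and \<epsilon> :: real and k1 k2 :: nat and b :: "nat \<Rightarrow> nat^'m"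
  assume A: "L \<ge> 1 \<and> (\<forall>x\<in>unit_cube. 0 \<le> f x) \<and> (\<forall>x. x \<notin> unit_cube \<longrightarrow> f x = 0) \<and> piecewise_constant L f"
    and ep: "\<epsilon> > 0"
    and B: "k1 \<ge> 1 \<and> k2 \<ge> 1 \<and> k1 \<ge> L \<and>
        real k2 \<ge> (4 ^ dim_of TYPE('m) * real (dim_of TYPE('m))) * real_of_ereal (Linf_norm f) * real k1 ^ (dim_of TYPE('m) - 1) / \<epsilon> ^ dim_of TYPE('m)"
    and b: "b \<in> Phi k1 k2"
  show "(\<Sum>j\<in>Hset L k1 k2 b. pval f k1 k2 b j powr (1 / real (dim_of TYPE('m)))) \<le> Jbar f + \<epsilon>"
    using main_bound[of L f \<epsilon> k1 k2 b] A B ep b by blast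
qed

end
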